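(* Let $R$ be a ring. \begin{enumerate} \item Every Ore set of $R$ is a localizable set of $R$. \item If $S$ is an Ore set of $R$, then $S$ is localizable with $\mathrm{ass}_R(S)=\mathfrak{a}$, where $\mathfrak{a}=\{r\in R: srt=0\text{ for some } s,t\in S\}$, and $R\langle S^{-1}\rangle$ is $R$-isomorphic to the Ore localization $\overline{S}^{-1}\overline{R}$, where $\overline{R}=R/\mathfrak{a}$ and $\overline{S}$ is the image of $S$ in $\overline{R}$ (a denominator set of $\overline{R}$). \end{enumerate}
   Context: Rings are associative with $1$. Multiplicative set: $SS\subseteq S$, $1\in S$, $0\notin S$. Ore set: $Sr\cap Rs\neq\emptyset$ and $rS\cap sR\neq\emptyset$ for all $r\in R,s\in S$. $R\langle S^{-1}\rangle=R\langle X_S\rangle/I_S$, where $R\langle X_S\rangle$ is freely generated by $R$ and noncommuting indeterminates $x_s$ ($s\in S$) and $I_S$ is generated by $sx_s-1,x_ss-1$; $\mathrm{ass}_R(S)=\ker(R\to R\langle S^{-1}\rangle)$. $S$ is localizable if $R\langle S^{-1}\rangle\ne0$ and every element is both of the form $(x_s+I_S)(r+I_S)$ and of the form $(r'+I_S)(x_{s'}+I_S)$, $s,s'\in S$, $r,r'\in R$. *)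

theory Defs
  imports "HOL-Algebra.QuotRing"
begin

definition mult_set :: "('a, 'm) ring_scheme \<Rightarrow> 'a set \<Rightarrow> bool" where
  "mult_set R S \<longleftrightarrow> S \<subseteq> carrier R \<and> \<one>\<^bsub>R\<^esub> \<in> S \<and> \<zero>\<^bsub>R\<^esub> \<notin> S
     \<and> (\<forall>s\<in>S. \<forall>t\<in>S. s \<otimes>\<^bsub>R\<^esub> t \<in> S)"

definition ore_set :: "('a, 'm) ring_scheme \<Rightarrow> 'a set \<Rightarrow> bool" where
  "ore_set R S \<longleftrightarrow> mult_set R S \<and>
     (\<forall>r\<in>carrier R. \<forall>s\<in>S.
        (\<exists>s'\<in>S. \<exists>r'\<in>carrier R. s' \<otimes>\<^bsub>R\<^esub> r = r' \<otimes>\<^bsub>R\<^esub> s) \<and>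
        (\<exists>s'\<in>S. \<exists>r'\<in>carrier R. r \<otimes>\<^bsub>R\<^esub> s' = s \<otimes>\<^bsub>R\<^esub> r'))"

text \<open>Z<A>: finitely supported integer-valued functions on words over A,
  with convolution (concatenation) product.\<close>
definition free_ring :: "'b set \<Rightarrow> ('b list \<Rightarrow> int) ring" where
  "free_ring A = \<lparr>carrier = {f. finite {w. f w \<noteq> 0} \<and> (\<forall>w. f w \<noteq> 0 \<longrightarrow> set w \<subseteq> A)},
      mult = (\<lambda>f g w. \<Sum>i\<in>{..length w}. f (take i w) * g (drop i w)),
      one = (\<lambda>w. if w = [] then 1 else 0),
      zero = (\<lambda>w. 0),
      add = (\<lambda>f g w. f w + g w)\<rparr>"

definition letter :: "'b \<Rightarrow> ('b list \<Rightarrow> int)" where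
  "letter a = (\<lambda>w. if w = [a] then 1 else 0)"

text \<open>R<X_S> is the ring freely generated by R and noncommuting indeterminates x_s.
  We realise R<S^{-1}> = R<X_S>/I_S as the free ring Z<A> on the alphabet
  A = (Inl ` carrier R) \<union> (Inr ` S) (letter Inl r stands for r, letter Inr s for x_s)
  modulo the two-sided ideal generated by the relations making r \<mapsto> letter (Inl r)
  a unital ring homomorphism (this gives R<X_S>) together with s x_s - 1, x_s s - 1.\<close>

definition loc_alph :: "('a, 'm) ring_scheme \<Rightarrow> 'a set \<Rightarrow> ('a + 'a) set" where
  "loc_alph R S = Inl ` carrier R \<union> Inr ` S"

definition loc_free :: "('a, 'm) ring_scheme \<Rightarrow> 'a set \<Rightarrow> (('a + 'a) list \<Rightarrow> int) ring" where
  "loc_free R S = free_ring (loc_alph R S)"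

definition loc_rels :: "('a, 'm) ring_scheme \<Rightarrow> 'a set \<Rightarrow> (('a + 'a) list \<Rightarrow> int) set" where
  "loc_rels R S =
     {(\<lambda>w. letter (Inl (r \<oplus>\<^bsub>R\<^esub> r')) w - letter (Inl r) w - letter (Inl r') w)
        | r r'. r \<in> carrier R \<and> r' \<in> carrier R}
   \<union> {(\<lambda>w. letter (Inl (r \<otimes>\<^bsub>R\<^esub> r')) w
            - (letter (Inl r) \<otimes>\<^bsub>loc_free R S\<^esub> letter (Inl r')) w)
        | r r'. r \<in> carrier R \<and> r' \<in> carrier R}
   \<union> {(\<lambda>w. letter (Inl \<one>\<^bsub>R\<^esub>) w - \<one>\<^bsub>loc_free R S\<^esub> w)}
   \<union> {(\<lambda>w. (letter (Inl s) \<otimes>\<^bsub>loc_free R S\<^esub> letter (Inr s)) w - \<one>\<^bsub>loc_free R S\<^esub> w)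
        | s. s \<in> S}
   \<union> {(\<lambda>w. (letter (Inr s) \<otimes>\<^bsub>loc_free R S\<^esub> letter (Inl s)) w - \<one>\<^bsub>loc_free R S\<^esub> w)
        | s. s \<in> S}"

definition loc_ideal :: "('a, 'm) ring_scheme \<Rightarrow> 'a set \<Rightarrow> (('a + 'a) list \<Rightarrow> int) set" where
  "loc_ideal R S = genideal (loc_free R S) (loc_rels R S)"

definition loc_ring :: "('a, 'm) ring_scheme \<Rightarrow> 'a set \<Rightarrow> (('a + 'a) list \<Rightarrow> int) set ring" where
  "loc_ring R S = loc_free R S Quot loc_ideal R S"

definition loc_map :: "('a, 'm) ring_scheme \<Rightarrow> 'a set \<Rightarrow> 'a \<Rightarrow> (('a + 'a) list \<Rightarrow> int) set" where
  "loc_map R S r = a_r_coset (loc_free R S) (loc_ideal R S) (letter (Inl r))"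

definition loc_x :: "('a, 'm) ring_scheme \<Rightarrow> 'a set \<Rightarrow> 'a \<Rightarrow> (('a + 'a) list \<Rightarrow> int) set" where
  "loc_x R S s = a_r_coset (loc_free R S) (loc_ideal R S) (letter (Inr s))"

definition ass :: "('a, 'm) ring_scheme \<Rightarrow> 'a set \<Rightarrow> 'a set" where
  "ass R S = {r \<in> carrier R. loc_map R S r = \<zero>\<^bsub>loc_ring R S\<^esub>}"

definition localizable :: "('a, 'm) ring_scheme \<Rightarrow> 'a set \<Rightarrow> bool" where
  "localizable R S \<longleftrightarrow> mult_set R S \<and>
     \<one>\<^bsub>loc_ring R S\<^esub> \<noteq> \<zero>\<^bsub>loc_ring R S\<^esub> \<and>
     (\<forall>u\<in>carrier (loc_ring R S).
        (\<exists>s\<in>S. \<exists>r\<in>carrier R. u = loc_x R S s \<otimes>\<^bsub>loc_ring R S\<^esub> loc_map R S r) \<and>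
        (\<exists>s'\<in>S. \<exists>r'\<in>carrier R. u = loc_map R S r' \<otimes>\<^bsub>loc_ring R S\<^esub> loc_x R S s'))"

definition left_denominator_set :: "('a, 'm) ring_scheme \<Rightarrow> 'a set \<Rightarrow> bool" where
  "left_denominator_set A T \<longleftrightarrow> T \<subseteq> carrier A \<and> \<one>\<^bsub>A\<^esub> \<in> T
     \<and> (\<forall>s\<in>T. \<forall>t\<in>T. s \<otimes>\<^bsub>A\<^esub> t \<in> T)
     \<and> (\<forall>a\<in>carrier A. \<forall>t\<in>T. \<exists>t'\<in>T. \<exists>a'\<in>carrier A. t' \<otimes>\<^bsub>A\<^esub> a = a' \<otimes>\<^bsub>A\<^esub> t)
     \<and> (\<forall>a\<in>carrier A. \<forall>t\<in>T. a \<otimes>\<^bsub>A\<^esub> t = \<zero>\<^bsub>A\<^esub> \<longrightarrow> (\<exists>t'\<in>T. t' \<otimes>\<^bsub>A\<^esub> a = \<zero>\<^bsub>A\<^esub>))"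

definition left_ring_of_fractions ::
  "('a, 'm) ring_scheme \<Rightarrow> 'a set \<Rightarrow> ('q, 'n) ring_scheme \<Rightarrow> ('a \<Rightarrow> 'q) \<Rightarrow> bool" where
  "left_ring_of_fractions A T Q \<phi> \<longleftrightarrow> ring Q \<and> \<phi> \<in> ring_hom A Q
     \<and> (\<forall>t\<in>T. \<phi> t \<in> Units Q)
     \<and> (\<forall>q\<in>carrier Q. \<exists>t\<in>T. \<exists>a\<in>carrier A. q = inv\<^bsub>Q\<^esub> (\<phi> t) \<otimes>\<^bsub>Q\<^esub> \<phi> a)
     \<and> (\<forall>a\<in>carrier A. \<phi> a = \<zero>\<^bsub>Q\<^esub> \<longleftrightarrow> (\<exists>t\<in>T. t \<otimes>\<^bsub>A\<^esub> a = \<zero>\<^bsub>A\<^esub>))"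

definition frak_a :: "('a, 'm) ring_scheme \<Rightarrow> 'a set \<Rightarrow> 'a set" where
  "frak_a R S = {r \<in> carrier R. \<exists>s\<in>S. \<exists>t\<in>S. s \<otimes>\<^bsub>R\<^esub> r \<otimes>\<^bsub>R\<^esub> t = \<zero>\<^bsub>R\<^esub>}"

end

theory Submission
  imports Defs
begin


definition splits :: "'b list \<Rightarrow> ('b list \<times> 'b list) set" where
  "splits w = {(u,v). u @ v = w}"

lemma splits_eq: "splits w = (\<lambda>i. (take i w, drop i w)) ` {..length w}"
proof -
  have "(u,v) \<in> (\<lambda>i. (take i w, drop i w)) ` {..length w}" if "u @ v = w" for u v
    using that by (auto intro!: image_eqI[where x="length u"])
  then show ?thesis unfolding splits_def by auto
qed

lemma finite_splits[simp]: "finite (splits w)"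
  unfolding splits_eq by simp

definition cmul :: "('b list \<Rightarrow> int) \<Rightarrow> ('b list \<Rightarrow> int) \<Rightarrow> 'b list \<Rightarrow> int" where
  "cmul f g w = (\<Sum>(u,v)\<in>splits w. f u * g v)"

lemma cmul_idx: "(\<Sum>i\<in>{..length w}. f (take i w) * g (drop i w)) = cmul f g w"
proof -
  have "inj_on (\<lambda>i. (take i w, drop i w)) {..length w}"
    by (auto simp: inj_on_def) (metis length_take min.absorb2)
  then show ?thesis unfolding cmul_def splits_eq
    by (simp add: sum.reindex)
qed

lemma free_mult: "mult (free_ring A) = cmul"
  unfolding free_ring_def by (auto simp: fun_eq_iff cmul_idx)

lemma free_simps:
  "one (free_ring A) = (\<lambda>w. if w = [] then 1 else 0)"
  "zero (free_ring A) = (\<lambda>w. 0)"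
  "add (free_ring A) = (\<lambda>f g w. f w + g w)"
  "carrier (free_ring A) = {f. finite {w. f w \<noteq> 0} \<and> (\<forall>w. f w \<noteq> 0 \<longrightarrow> set w \<subseteq> A)}"
  unfolding free_ring_def by auto

lemma cmul_assoc:
  fixes f g h :: "'b list \<Rightarrow> int"
  shows "cmul (cmul f g) h = cmul f (cmul g h)"
proof
  fix w :: "'b list"
  let ?T = "{(a,b,v). a @ b @ v = w}"
  have "cmul (cmul f g) h w = (\<Sum>p\<in>splits w. \<Sum>q\<in>splits (fst p). f (fst q) * g (snd q) * h (snd p))"
    unfolding cmul_def by (auto simp: sum_distrib_right split_beta intro!: sum.cong)
  also have "\<dots> = (\<Sum>pq\<in>Sigma (splits w) (\<lambda>p. splits (fst p)). f (fst (snd pq)) * g (snd (snd pq)) * h (snd (fst pq)))"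
    by (subst sum.Sigma) (auto simp: split_beta)
  also have "\<dots> = (\<Sum>t\<in>?T. f (fst t) * g (fst (snd t)) * h (snd (snd t)))"
    by (rule sum.reindex_bij_witness[where i="\<lambda>(a,b,v). ((a@b,v),(a,b))" and j="\<lambda>((x,v),(a,b)). (a,b,v)"])
       (auto simp: splits_def)
  also have "\<dots> = (\<Sum>pq\<in>Sigma (splits w) (\<lambda>p. splits (snd p)). f (fst (fst pq)) * g (fst (snd pq)) * h (snd (snd pq)))"
    by (rule sum.reindex_bij_witness[where j="\<lambda>(a,b,v). ((a,b@v),(b,v))" and i="\<lambda>((a,y),(b,v)). (a,b,v)"])
       (auto simp: splits_def)
  also have "\<dots> = (\<Sum>p\<in>splits w. \<Sum>q\<in>splits (snd p). f (fst p) * g (fst q) * h (snd q))"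
    by (subst sum.Sigma) (auto simp: split_beta)
  also have "\<dots> = cmul f (cmul g h) w"
    unfolding cmul_def by (auto simp: sum_distrib_left mult.assoc split_beta intro!: sum.cong)
  finally show "cmul (cmul f g) h w = cmul f (cmul g h) w" .
qed

lemma cmul_ldistr: "cmul (\<lambda>w. f w + g w) h = (\<lambda>w. cmul f h w + cmul g h w)"
  unfolding cmul_def by (auto simp: fun_eq_iff sum.distrib distrib_right split_beta)

lemma cmul_rdistr: "cmul h (\<lambda>w. f w + g w) = (\<lambda>w. cmul h f w + cmul h g w)"
  unfolding cmul_def by (auto simp: fun_eq_iff sum.distrib distrib_left split_beta)

lemma splits_Nil_l: "(\<Sum>(u,v)\<in>splits w. (if u = [] then 1 else 0) * g v) = (g w :: int)"
proof -
  have "(\<Sum>(u,v)\<in>splits w. (if u = [] then 1 else 0) * g v) = (\<Sum>p\<in>splits w. if p = ([],w) then g w else 0)"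
    by (rule sum.cong) (auto simp: splits_def split: if_splits)
  also have "\<dots> = g w" using finite_splits[of w] by (subst sum.delta) (auto simp: splits_def)
  finally show ?thesis .
qed

lemma splits_Nil_r: "(\<Sum>(u,v)\<in>splits w. g u * (if v = [] then 1 else 0)) = (g w :: int)"
proof -
  have "(\<Sum>(u,v)\<in>splits w. g u * (if v = [] then 1 else 0)) = (\<Sum>p\<in>splits w. if p = (w,[]) then g w else 0)"
    by (rule sum.cong) (auto simp: splits_def split: if_splits)
  also have "\<dots> = g w" using finite_splits[of w] by (subst sum.delta) (auto simp: splits_def)
  finally show ?thesis .
qed

lemma cmul_support: "cmul f g w \<noteq> 0 \<Longrightarrow> \<exists>u v. w = u @ v \<and> f u \<noteq> 0 \<and> g v \<noteq> 0"
proof -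
  assume "cmul f g w \<noteq> 0"
  then obtain p where "p \<in> splits w" "(case p of (u,v) \<Rightarrow> f u * g v) \<noteq> 0"
    unfolding cmul_def by (meson sum.not_neutral_contains_not_neutral)
  then show ?thesis by (auto simp: splits_def split_beta)
qed

lemma cmul_closed:
  assumes "f \<in> carrier (free_ring A)" "g \<in> carrier (free_ring A)"
  shows "cmul f g \<in> carrier (free_ring A)"
proof -
  have sub: "{w. cmul f g w \<noteq> 0} \<subseteq> (\<lambda>(u,v). u @ v) ` ({u. f u \<noteq> 0} \<times> {v. g v \<noteq> 0})"
    using cmul_support by fastforce
  have "finite {w. cmul f g w \<noteq> 0}"
    using assms by (intro finite_subset[OF sub]) (auto simp: free_simps)
  moreover have "set w \<subseteq> A" if nz: "cmul f g w \<noteq> 0" for w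
  proof -
    obtain u v where "w = u @ v" "f u \<noteq> 0" "g v \<noteq> 0" using cmul_support[OF nz] by blast
    then show ?thesis using assms unfolding free_simps by auto
  qed
  ultimately show ?thesis by (simp add: free_simps)
qed

lemma free_one_l: "cmul (\<lambda>w. if w = [] then 1 else 0) f = f"
  unfolding cmul_def by (rule ext, rule splits_Nil_l)

lemma free_one_r: "cmul f (\<lambda>w. if w = [] then 1 else 0) = f"
  unfolding cmul_def by (rule ext, rule splits_Nil_r)

lemma free_ring_is_ring: "ring (free_ring A)"
proof (rule ringI)
  show "abelian_group (free_ring A)"
  proof (rule abelian_groupI)
    fix x y assume "x \<in> carrier (free_ring A)" "y \<in> carrier (free_ring A)"
    then show "x \<oplus>\<^bsub>free_ring A\<^esub> y \<in> carrier (free_ring A)"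
      unfolding free_simps
      apply (auto intro: finite_subset[of _ "{w. x w \<noteq> 0} \<union> {w. y w \<noteq> 0}"])
      by (metis add.right_neutral add_0 subsetD)
  next
    fix x assume "x \<in> carrier (free_ring A)"
    then show "\<exists>y\<in>carrier (free_ring A). y \<oplus>\<^bsub>free_ring A\<^esub> x = \<zero>\<^bsub>free_ring A\<^esub>"
      unfolding free_simps by (intro bexI[where x="\<lambda>w. - x w"]) auto
  qed (unfold free_simps, auto)
next
  show "monoid (free_ring A)"
  proof (rule monoidI)
    show "\<one>\<^bsub>free_ring A\<^esub> \<in> carrier (free_ring A)"
      unfolding free_simps by auto
  qed (unfold free_mult free_simps(1), auto simp: cmul_closed cmul_assoc free_one_l free_one_r)
qed (unfold free_mult free_simps(3), auto simp: cmul_ldistr cmul_rdistr)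



definition delta :: "'b list \<Rightarrow> 'b list \<Rightarrow> int" where
  "delta u = (\<lambda>w. if w = u then 1 else 0)"

lemma delta_carrier: "set u \<subseteq> A \<Longrightarrow> delta u \<in> carrier (free_ring A)"
  unfolding free_simps delta_def by auto

lemma cmul_delta: "cmul (delta u) (delta v) = delta (u @ v)"
proof
  fix w
  have "cmul (delta u) (delta v) w = (\<Sum>p\<in>splits w. if p = (u,v) then 1 else 0)"
    unfolding cmul_def delta_def by (rule sum.cong) (auto split: if_splits)
  also have "\<dots> = delta (u @ v) w"
    using finite_splits[of w] by (subst sum.delta) (auto simp: splits_def delta_def)
  finally show "cmul (delta u) (delta v) w = delta (u @ v) w" .
qed

lemma letter_delta: "letter a = delta [a]"
  unfolding letter_def delta_def by simp

lemma one_delta: "\<one>\<^bsub>free_ring A\<^esub> = delta []"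
  unfolding free_simps delta_def by simp

lemma free_neg: "f \<in> carrier (free_ring A) \<Longrightarrow> \<ominus>\<^bsub>free_ring A\<^esub> f = (\<lambda>w. - f w)"
proof -
  interpret F: ring "free_ring A" by (rule free_ring_is_ring)
  assume f: "f \<in> carrier (free_ring A)"
  have m: "(\<lambda>w. - f w) \<in> carrier (free_ring A)" using f unfolding free_simps by auto
  show ?thesis
    by (rule F.minus_equality) (use f m in \<open>auto simp: free_simps\<close>)
qed

lemma free_induct[consumes 1, case_names zero delta neg add]:
  assumes f: "f \<in> carrier (free_ring A)"
    and z: "P \<zero>\<^bsub>free_ring A\<^esub>"
    and d: "\<And>u. set u \<subseteq> A \<Longrightarrow> P (delta u)"
    and n: "\<And>x. x \<in> carrier (free_ring A) \<Longrightarrow> P x \<Longrightarrow> P (\<ominus>\<^bsub>free_ring A\<^esub> x)"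
    and a: "\<And>x y. x \<in> carrier (free_ring A) \<Longrightarrow> y \<in> carrier (free_ring A) \<Longrightarrow> P x \<Longrightarrow> P y
             \<Longrightarrow> P (x \<oplus>\<^bsub>free_ring A\<^esub> y)"
  shows "P f"
proof -
  interpret F: ring "free_ring A" by (rule free_ring_is_ring)
  have cc0: "(\<lambda>v. if v = u then i else 0) \<in> carrier (free_ring A)" if "set u \<subseteq> A" for i :: int and u
    using that by (auto simp: free_simps)
  have mono: "P (\<lambda>v. if v = u then c else 0)" if u: "set u \<subseteq> A" for u c
  proof (induction c rule: int_induct[where k=0])
    case base
    have "(\<lambda>v. if v = u then 0 else 0) = \<zero>\<^bsub>free_ring A\<^esub>" by (simp add: free_simps fun_eq_iff)
    then show ?case using z by simp
  next
    case (step1 i)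
    have e: "(\<lambda>v. if v = u then i + 1 else 0) = (\<lambda>v. if v = u then i else 0) \<oplus>\<^bsub>free_ring A\<^esub> delta u"
      by (simp add: free_simps fun_eq_iff delta_def)
    show ?case unfolding e
      by (rule a) (use step1 d[OF u] delta_carrier[OF u] cc0[OF u] in auto)
  next
    case (step2 i)
    have e: "(\<lambda>v. if v = u then i - 1 else 0) = (\<lambda>v. if v = u then i else 0) \<oplus>\<^bsub>free_ring A\<^esub> (\<ominus>\<^bsub>free_ring A\<^esub> delta u)"
      using u by (simp add: free_simps fun_eq_iff delta_def free_neg delta_carrier)
    show ?case unfolding e
      by (rule a) (use step2 d[OF u] n delta_carrier[OF u] cc0[OF u] F.a_inv_closed in auto)
  qed
  have main: "\<forall>f\<in>carrier (free_ring A). {w. f w \<noteq> 0} \<subseteq> W \<longrightarrow> P f" if "finite W" for W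
    using that
  proof (induction W rule: finite_induct)
    case empty
    have "f = \<zero>\<^bsub>free_ring A\<^esub>" if "{w. f w \<noteq> 0} \<subseteq> {}" for f :: "'a list \<Rightarrow> int"
      using that by (auto simp: free_simps fun_eq_iff)
    then show ?case using z by auto
  next
    case (insert u W)
    show ?case
    proof (intro ballI impI)
      fix f assume fc: "f \<in> carrier (free_ring A)" and sup: "{w. f w \<noteq> 0} \<subseteq> insert u W"
      show "P f"
      proof (cases "f u = 0")
        case True
        then have "{w. f w \<noteq> 0} \<subseteq> W" using sup by auto
        then show ?thesis using insert fc by auto
      next
        case False
        then have u: "set u \<subseteq> A" using fc by (auto simp: free_simps)
        let ?f1 = "\<lambda>v. if v = u then 0 else f v"
        let ?f2 = "\<lambda>v. if v = u then f u else 0"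
        have f1c: "?f1 \<in> carrier (free_ring A)" using fc
          by (auto simp: free_simps intro: finite_subset[of _ "{w. f w \<noteq> 0}"])
        have f2c: "?f2 \<in> carrier (free_ring A)" using u by (auto simp: free_simps)
        have "{w. ?f1 w \<noteq> 0} \<subseteq> W" using sup by auto
        moreover have "{w. ?f1 w \<noteq> 0} \<subseteq> W \<longrightarrow> P ?f1" using bspec[OF insert.IH f1c] .
        ultimately have "P ?f1" by blast
        moreover have "P ?f2" using mono[OF u] .
        moreover have "f = ?f1 \<oplus>\<^bsub>free_ring A\<^esub> ?f2" by (simp add: free_simps fun_eq_iff)
        ultimately show ?thesis using a f1c f2c by metis
      qed
    qed
  qed
  show ?thesis using main[of "{w. f w \<noteq> 0}"] f by (auto simp: free_simps)
qed


definition wprod :: "('c, 'm) ring_scheme \<Rightarrow> ('b \<Rightarrow> 'c) \<Rightarrow> 'b list \<Rightarrow> 'c" where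
  "wprod B g w = foldr (\<lambda>a r. g a \<otimes>\<^bsub>B\<^esub> r) w \<one>\<^bsub>B\<^esub>"

definition fev :: "('c, 'm) ring_scheme \<Rightarrow> ('b \<Rightarrow> 'c) \<Rightarrow> ('b list \<Rightarrow> int) \<Rightarrow> 'c" where
  "fev B g f = finsum B (\<lambda>w. add_pow B (f w) (wprod B g w)) {w. f w \<noteq> 0}"

locale fevl = ring B for B (structure) +
  fixes g :: "'b \<Rightarrow> 'c"
  assumes g_carr: "\<And>a. g a \<in> carrier B"
begin

lemma wprod_closed[simp]: "wprod B g w \<in> carrier B"
  by (induction w) (auto simp: wprod_def g_carr)

lemma wprod_Nil[simp]: "wprod B g [] = \<one>"
  by (simp add: wprod_def)

lemma wprod_single[simp]: "wprod B g [a] = g a"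
  by (simp add: wprod_def g_carr)

lemma wprod_append: "wprod B g (u @ v) = wprod B g u \<otimes> wprod B g v"
proof (induction u)
  case Nil then show ?case by simp
next
  case (Cons a u)
  have "wprod B g ((a # u) @ v) = g a \<otimes> wprod B g (u @ v)" by (simp add: wprod_def)
  also have "\<dots> = g a \<otimes> (wprod B g u \<otimes> wprod B g v)" using Cons by simp
  also have "\<dots> = (g a \<otimes> wprod B g u) \<otimes> wprod B g v" by (simp add: m_assoc g_carr)
  also have "g a \<otimes> wprod B g u = wprod B g (a # u)" by (simp add: wprod_def)
  finally show ?case .
qed

lemma apow_closed[simp]: "add_pow B (n::int) x \<in> carrier B" if "x \<in> carrier B"
  using that by (simp add: add.int_pow_closed)

lemma apow_0[simp]: "add_pow B (0::int) x = \<zero>"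
  by (simp add: add_pow_def)

lemma apow_1[simp]: "x \<in> carrier B \<Longrightarrow> add_pow B (1::int) x = x"
  by (simp add: add.int_pow_1)

lemma apow_add: "x \<in> carrier B \<Longrightarrow> add_pow B ((n::int) + m) x = add_pow B n x \<oplus> add_pow B m x"
  by (simp add: add.int_pow_mult)

lemma fev_sub:
  assumes "finite W" "{w. f w \<noteq> 0} \<subseteq> W"
  shows "fev B g f = finsum B (\<lambda>w. add_pow B (f w) (wprod B g w)) W"
  unfolding fev_def
  by (rule add.finprod_mono_neutral_cong_left) (use assms in auto)

lemma fev_closed[simp]: "fev B g f \<in> carrier B"
  unfolding fev_def by (rule finsum_closed) auto

lemma fev_add:
  assumes "finite {w. f w \<noteq> 0}" "finite {w. h w \<noteq> 0}"
  shows "fev B g (\<lambda>w. f w + h w) = fev B g f \<oplus> fev B g h"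
proof -
  let ?W = "{w. f w \<noteq> 0} \<union> {w. h w \<noteq> 0}"
  have fin: "finite ?W" using assms by simp
  have "fev B g (\<lambda>w. f w + h w) = finsum B (\<lambda>w. add_pow B (f w + h w) (wprod B g w)) ?W"
    by (rule fev_sub) (use fin in auto)
  also have "\<dots> = finsum B (\<lambda>w. add_pow B (f w) (wprod B g w) \<oplus> add_pow B (h w) (wprod B g w)) ?W"
    by (rule finsum_cong') (auto simp: apow_add)
  also have "\<dots> = finsum B (\<lambda>w. add_pow B (f w) (wprod B g w)) ?W \<oplus> finsum B (\<lambda>w. add_pow B (h w) (wprod B g w)) ?W"
    by (rule finsum_addf) auto
  also have "\<dots> = fev B g f \<oplus> fev B g h"
    using fin by (simp add: fev_sub[symmetric])
  finally show ?thesis .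
qed

lemma fev_add_free:
  assumes "f \<in> carrier (free_ring A)" "h \<in> carrier (free_ring A)"
  shows "fev B g (f \<oplus>\<^bsub>free_ring A\<^esub> h) = fev B g f \<oplus> fev B g h"
  using assms fev_add[of f h] by (simp add: free_simps)

lemma fev_zero: "fev B g (\<lambda>w. 0) = \<zero>"
  by (simp add: fev_def)

lemma fev_zero_free[simp]: "fev B g \<zero>\<^bsub>free_ring A\<^esub> = \<zero>"
  by (simp add: free_simps fev_zero)

lemma fev_delta: "fev B g (delta u) = wprod B g u"
proof -
  have "fev B g (delta u) = finsum B (\<lambda>w. add_pow B (delta u w) (wprod B g w)) {u}"
    by (rule fev_sub) (auto simp: delta_def)
  also have "\<dots> = wprod B g u" by (simp add: delta_def)
  finally show ?thesis .
qed

lemma fev_neg: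
  assumes x: "x \<in> carrier (free_ring A)"
  shows "fev B g (\<ominus>\<^bsub>free_ring A\<^esub> x) = \<ominus> fev B g x"
proof -
  interpret F: ring "free_ring A" by (rule free_ring_is_ring)
  have "fev B g (\<ominus>\<^bsub>free_ring A\<^esub> x) \<oplus> fev B g x = fev B g (\<ominus>\<^bsub>free_ring A\<^esub> x \<oplus>\<^bsub>free_ring A\<^esub> x)"
    using x by (simp add: fev_add_free)
  also have "\<dots> = \<zero>" using x by (simp add: F.l_neg)
  finally show ?thesis
    by (intro minus_equality[symmetric]) auto
qed

lemma fev_mult:
  assumes x: "x \<in> carrier (free_ring A)" and y: "y \<in> carrier (free_ring A)"
  shows "fev B g (x \<otimes>\<^bsub>free_ring A\<^esub> y) = fev B g x \<otimes> fev B g y"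
proof -
  interpret F: ring "free_ring A" by (rule free_ring_is_ring)
  have delta_case: "fev B g (delta u \<otimes>\<^bsub>free_ring A\<^esub> y) = fev B g (delta u) \<otimes> fev B g y"
    if u: "set u \<subseteq> A" and y: "y \<in> carrier (free_ring A)" for u y
    using y
  proof (induction y rule: free_induct)
    case zero
    then show ?case using delta_carrier[OF u] by simp
  next
    case (delta v)
    then show ?case by (simp add: free_mult cmul_delta fev_delta wprod_append)
  next
    case (neg y)
    then show ?case using delta_carrier[OF u]
      by (simp add: F.r_minus fev_neg r_minus)
  next
    case (add y z)
    then show ?case using delta_carrier[OF u]
      by (simp add: F.r_distr fev_add_free r_distr)
  qed
  show ?thesis using x y
  proof (induction x arbitrary: y rule: free_induct)
    case zero
    then show ?case by simp
  next
    case (delta u)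
    then show ?case using delta_case by blast
  next
    case (neg x)
    then show ?case by (simp add: F.l_minus fev_neg l_minus)
  next
    case (add x z)
    then show ?case by (simp add: F.l_distr fev_add_free l_distr)
  qed
qed

lemma fev_one: "fev B g \<one>\<^bsub>free_ring A\<^esub> = \<one>"
  by (simp add: one_delta fev_delta)

lemma fev_hom: "fev B g \<in> ring_hom (free_ring A) B"
  by (rule ring_hom_memI) (auto simp: fev_mult fev_add_free fev_one)

lemma fev_letter: "fev B g (letter a) = g a"
  by (simp add: letter_delta fev_delta)

end



locale ore_reg = ring A for A (structure) +
  fixes T
  assumes T_sub: "T \<subseteq> carrier A"
    and T_one: "\<one> \<in> T"
    and T_mult: "\<And>s t. s \<in> T \<Longrightarrow> t \<in> T \<Longrightarrow> s \<otimes> t \<in> T"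
    and T_ore: "\<And>a t. a \<in> carrier A \<Longrightarrow> t \<in> T \<Longrightarrow> \<exists>t'\<in>T. \<exists>a'\<in>carrier A. t' \<otimes> a = a' \<otimes> t"
    and T_lreg: "\<And>t x. t \<in> T \<Longrightarrow> x \<in> carrier A \<Longrightarrow> t \<otimes> x = \<zero> \<Longrightarrow> x = \<zero>"
    and T_rreg: "\<And>t x. t \<in> T \<Longrightarrow> x \<in> carrier A \<Longrightarrow> x \<otimes> t = \<zero> \<Longrightarrow> x = \<zero>"
begin

lemma Tc: "t \<in> T \<Longrightarrow> t \<in> carrier A"
  using T_sub by auto

lemma lcancel:
  assumes "t \<in> T" "x \<in> carrier A" "y \<in> carrier A" "t \<otimes> x = t \<otimes> y"
  shows "x = y"
proof -
  have t: "t \<in> carrier A" using assms Tc by auto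
  have "t \<otimes> (x \<ominus> y) = t \<otimes> x \<ominus> t \<otimes> y" using assms t by (simp add: r_distr r_minus minus_eq)
  also have "\<dots> = \<zero>" using assms t by (simp add: minus_eq r_neg)
  finally have "x \<ominus> y = \<zero>" using T_lreg[of t "x \<ominus> y"] assms by auto
  moreover have "x = (x \<ominus> y) \<oplus> y" using assms by (simp add: minus_eq a_assoc l_neg)
  ultimately show ?thesis using assms by simp
qed

lemma rcancel:
  assumes "t \<in> T" "x \<in> carrier A" "y \<in> carrier A" "x \<otimes> t = y \<otimes> t"
  shows "x = y"
proof -
  have t: "t \<in> carrier A" using assms Tc by auto
  have "(x \<ominus> y) \<otimes> t = x \<otimes> t \<ominus> y \<otimes> t" using assms t by (simp add: l_distr l_minus minus_eq)
  also have "\<dots> = \<zero>" using assms t by (simp add: minus_eq r_neg)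
  finally have "x \<ominus> y = \<zero>" using T_rreg[of t "x \<ominus> y"] assms by auto
  moreover have "x = (x \<ominus> y) \<oplus> y" using assms by (simp add: minus_eq a_assoc l_neg)
  ultimately show ?thesis using assms by simp
qed

definition eqv :: "'a \<Rightarrow> 'a \<Rightarrow> 'a \<Rightarrow> 'a \<Rightarrow> bool" where
  "eqv s b s' b' \<longleftrightarrow> (\<exists>u\<in>carrier A. \<exists>u'\<in>carrier A. u \<otimes> s = u' \<otimes> s' \<and> u \<otimes> s \<in> T \<and> u \<otimes> b = u' \<otimes> b')"

lemma eqv_all:
  assumes e: "eqv s b s' b'" and st: "s \<in> T" "s' \<in> T" "b \<in> carrier A" "b' \<in> carrier A"
    and u: "u \<in> carrier A" "u' \<in> carrier A" "u \<otimes> s = u' \<otimes> s'" "u \<otimes> s \<in> T"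
  shows "u \<otimes> b = u' \<otimes> b'"
proof -
  obtain v v' where v: "v \<in> carrier A" "v' \<in> carrier A" "v \<otimes> s = v' \<otimes> s'" "v \<otimes> s \<in> T" "v \<otimes> b = v' \<otimes> b'"
    using e unfolding eqv_def by blast
  have sc: "s \<in> carrier A" "s' \<in> carrier A" using st Tc by auto
  obtain x y where xy: "x \<in> T" "y \<in> carrier A" "x \<otimes> (u \<otimes> s) = y \<otimes> (v \<otimes> s)"
    using T_ore[of "u \<otimes> s" "v \<otimes> s"] u v sc by auto
  have xc: "x \<in> carrier A" using xy Tc by auto
  have e1: "x \<otimes> u = y \<otimes> v"
    by (rule rcancel[OF st(1)]) (use xy xc u v sc in \<open>auto simp: m_assoc\<close>)
  have e2: "x \<otimes> u' = y \<otimes> v'"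
  proof (rule rcancel[OF st(2)])
    have "x \<otimes> u' \<otimes> s' = x \<otimes> (u \<otimes> s)" using u xc sc by (simp add: m_assoc)
    also have "\<dots> = y \<otimes> (v \<otimes> s)" using xy by simp
    also have "\<dots> = y \<otimes> v' \<otimes> s'" using v xy sc by (simp add: m_assoc)
    finally show "x \<otimes> u' \<otimes> s' = y \<otimes> v' \<otimes> s'" .
  qed (use xc u v xy in auto)
  show ?thesis
  proof (rule lcancel[OF xy(1)])
    have "x \<otimes> (u \<otimes> b) = (x \<otimes> u) \<otimes> b" using xc u st by (simp add: m_assoc)
    also have "\<dots> = y \<otimes> (v \<otimes> b)" using e1 xy v st by (simp add: m_assoc)
    also have "\<dots> = y \<otimes> (v' \<otimes> b')" using v by simp
    also have "\<dots> = (x \<otimes> u') \<otimes> b'" using e2 xy v st by (simp add: m_assoc)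
    also have "\<dots> = x \<otimes> (u' \<otimes> b')" using xc u st by (simp add: m_assoc)
    finally show "x \<otimes> (u \<otimes> b) = x \<otimes> (u' \<otimes> b')" .
  qed (use u st in auto)
qed

lemma eqv_refl: "s \<in> T \<Longrightarrow> b \<in> carrier A \<Longrightarrow> eqv s b s b"
  unfolding eqv_def using Tc by (intro bexI[of _ \<one>]) auto

lemma eqv_sym: "eqv s b s' b' \<Longrightarrow> s \<in> T \<Longrightarrow> s' \<in> T \<Longrightarrow> eqv s' b' s b"
proof -
  assume "eqv s b s' b'"
  then obtain u u' where "u \<in> carrier A" "u' \<in> carrier A" "u \<otimes> s = u' \<otimes> s'" "u \<otimes> s \<in> T" "u \<otimes> b = u' \<otimes> b'"
    unfolding eqv_def by blast
  then show ?thesis unfolding eqv_def by (intro bexI[of _ u'] bexI[of _ u]) auto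
qed

lemma ore_pair:
  assumes "s \<in> carrier A" "t \<in> T"
  shows "\<exists>u\<in>T. \<exists>v\<in>carrier A. u \<otimes> s = v \<otimes> t"
  using T_ore assms by blast

lemma eqv_trans:
  assumes e1: "eqv s1 b1 s2 b2" and e2: "eqv s2 b2 s3 b3"
    and st: "s1 \<in> T" "s2 \<in> T" "s3 \<in> T" "b1 \<in> carrier A" "b2 \<in> carrier A" "b3 \<in> carrier A"
  shows "eqv s1 b1 s3 b3"
proof -
  have sc: "s1 \<in> carrier A" "s2 \<in> carrier A" "s3 \<in> carrier A" using st Tc by auto
  obtain u1 u2 where u: "u1 \<in> T" "u2 \<in> carrier A" "u1 \<otimes> s1 = u2 \<otimes> s2"
    using ore_pair[of s1 s2] sc st by auto
  have u1c: "u1 \<in> carrier A" using u Tc by auto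
  have u1s1: "u1 \<otimes> s1 \<in> T" using T_mult[OF u(1) st(1)] .
  obtain x y where xy: "x \<in> T" "y \<in> carrier A" "x \<otimes> (u1 \<otimes> s1) = y \<otimes> s3"
    using ore_pair[of "u1 \<otimes> s1" s3] sc st u1c by auto
  have xc: "x \<in> carrier A" using xy Tc by auto
  have m: "x \<otimes> u1 \<otimes> s1 \<in> T" using T_mult[OF xy(1) u1s1] xc u1c sc by (simp add: m_assoc)
  have q1: "(x \<otimes> u1) \<otimes> s1 = (x \<otimes> u2) \<otimes> s2" using u xc u1c sc by (simp add: m_assoc)
  have q2: "(x \<otimes> u2) \<otimes> s2 = y \<otimes> s3" using u xy xc u1c sc by (simp add: m_assoc)
  have r1: "(x \<otimes> u1) \<otimes> b1 = (x \<otimes> u2) \<otimes> b2"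
    by (rule eqv_all[OF e1 st(1,2,4,5)]) (use q1 m xc u1c u in simp_all)
  have m2: "(x \<otimes> u2) \<otimes> s2 \<in> T" using q1 m by simp
  have r2: "(x \<otimes> u2) \<otimes> b2 = y \<otimes> b3"
    by (rule eqv_all[OF e2 st(2,3,5,6)]) (use q2 m2 xc u xy in simp_all)
  show ?thesis unfolding eqv_def
    by (rule bexI[of _ "x \<otimes> u1"], rule bexI[of _ y]) (use q1 q2 m r1 r2 xy xc u1c in simp_all)
qed

definition frac :: "'a \<Rightarrow> 'a \<Rightarrow> ('a \<times> 'a) set" where
  "frac s b = {(t,c). t \<in> T \<and> c \<in> carrier A \<and> eqv t c s b}"

lemma frac_eq_iff:
  assumes "s \<in> T" "b \<in> carrier A" "s' \<in> T" "b' \<in> carrier A"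
  shows "frac s b = frac s' b' \<longleftrightarrow> eqv s b s' b'"
proof
  assume "frac s b = frac s' b'"
  moreover have "(s,b) \<in> frac s b" using assms eqv_refl unfolding frac_def by auto
  ultimately show "eqv s b s' b'" unfolding frac_def by auto
next
  assume e: "eqv s b s' b'"
  show "frac s b = frac s' b'"
    unfolding frac_def using e eqv_sym[OF e] assms
    by (auto intro: eqv_trans[of _ _ s b s' b'] eqv_trans[of _ _ s' b' s b])
qed

lemma frac_eqI: "eqv s b s' b' \<Longrightarrow> s \<in> T \<Longrightarrow> b \<in> carrier A \<Longrightarrow> s' \<in> T \<Longrightarrow> b' \<in> carrier A \<Longrightarrow> frac s b = frac s' b'"
  using frac_eq_iff by blast

lemma mem_frac:
  assumes "(t,c) \<in> frac s b" "s \<in> T" "b \<in> carrier A"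
  shows "t \<in> T" "c \<in> carrier A" "frac t c = frac s b"
  using assms frac_eq_iff unfolding frac_def by auto

lemma self_frac: "s \<in> T \<Longrightarrow> b \<in> carrier A \<Longrightarrow> (s,b) \<in> frac s b"
  unfolding frac_def using eqv_refl by auto

lemma frac_expand:
  assumes "s \<in> T" "b \<in> carrier A" "u \<in> carrier A" "u \<otimes> s \<in> T"
  shows "frac (u \<otimes> s) (u \<otimes> b) = frac s b"
proof (rule frac_eqI)
  show "eqv (u \<otimes> s) (u \<otimes> b) s b" unfolding eqv_def
    using assms Tc by (intro bexI[of _ \<one>] bexI[of _ u]) auto
qed (use assms Tc in auto)

definition Qcar :: "('a \<times> 'a) set set" where
  "Qcar = {frac s b | s b. s \<in> T \<and> b \<in> carrier A}"

definition qadd :: "('a \<times> 'a) set \<Rightarrow> ('a \<times> 'a) set \<Rightarrow> ('a \<times> 'a) set" where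
  "qadd X Y = \<Union>{frac (u \<otimes> s) (u \<otimes> b \<oplus> v \<otimes> c) | s b t c u v. (s,b) \<in> X \<and> (t,c) \<in> Y \<and>
      u \<in> carrier A \<and> v \<in> carrier A \<and> u \<otimes> s = v \<otimes> t \<and> u \<otimes> s \<in> T}"

definition qmul :: "('a \<times> 'a) set \<Rightarrow> ('a \<times> 'a) set \<Rightarrow> ('a \<times> 'a) set" where
  "qmul X Y = \<Union>{frac (u \<otimes> s) (v \<otimes> c) | s b t c u v. (s,b) \<in> X \<and> (t,c) \<in> Y \<and>
      u \<in> carrier A \<and> v \<in> carrier A \<and> u \<otimes> b = v \<otimes> t \<and> u \<otimes> s \<in> T}"

lemma add_wd:
  assumes e1: "eqv s b s' b'" and e2: "eqv t c t' c'"
    and c: "s \<in> T" "s' \<in> T" "t \<in> T" "t' \<in> T" "b \<in> carrier A" "b' \<in> carrier A" "c \<in> carrier A" "c' \<in> carrier A"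
    and uv: "u \<in> carrier A" "v \<in> carrier A" "u \<otimes> s = v \<otimes> t" "u \<otimes> s \<in> T"
    and uv': "u' \<in> carrier A" "v' \<in> carrier A" "u' \<otimes> s' = v' \<otimes> t'" "u' \<otimes> s' \<in> T"
  shows "eqv (u \<otimes> s) (u \<otimes> b \<oplus> v \<otimes> c) (u' \<otimes> s') (u' \<otimes> b' \<oplus> v' \<otimes> c')"
proof -
  have sc: "s \<in> carrier A" "s' \<in> carrier A" "t \<in> carrier A" "t' \<in> carrier A" using c Tc by auto
  obtain x y where xy: "x \<in> T" "y \<in> carrier A" "x \<otimes> (u \<otimes> s) = y \<otimes> (u' \<otimes> s')"
    using ore_pair[of "u \<otimes> s" "u' \<otimes> s'"] uv uv' sc by auto
  have xc: "x \<in> carrier A" using xy Tc by auto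
  have xT: "x \<otimes> (u \<otimes> s) \<in> T" using T_mult[OF xy(1) uv(4)] .
  have h1: "(x \<otimes> u) \<otimes> b = (y \<otimes> u') \<otimes> b'"
  proof (rule eqv_all[OF e1 c(1,2,5,6)])
    show "x \<otimes> u \<otimes> s = y \<otimes> u' \<otimes> s'" using xy xc uv uv' sc by (simp add: m_assoc)
    show "x \<otimes> u \<otimes> s \<in> T" using xT xc uv sc by (simp add: m_assoc)
  qed (use xc xy uv uv' in simp_all)
  have h2: "(x \<otimes> v) \<otimes> c = (y \<otimes> v') \<otimes> c'"
  proof (rule eqv_all[OF e2 c(3,4,7,8)])
    have "x \<otimes> v \<otimes> t = x \<otimes> (u \<otimes> s)" using xc uv sc by (simp add: m_assoc)
    moreover have "y \<otimes> v' \<otimes> t' = y \<otimes> (u' \<otimes> s')" using xy uv' sc by (simp add: m_assoc)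
    ultimately show "x \<otimes> v \<otimes> t = y \<otimes> v' \<otimes> t'" using xy by simp
    show "x \<otimes> v \<otimes> t \<in> T" using xT \<open>x \<otimes> v \<otimes> t = x \<otimes> (u \<otimes> s)\<close> by simp
  qed (use xc xy uv uv' in simp_all)
  have fin: "x \<otimes> (u \<otimes> b \<oplus> v \<otimes> c) = y \<otimes> (u' \<otimes> b' \<oplus> v' \<otimes> c')"
      using h1 h2 xc xy uv uv' c by (simp add: r_distr m_assoc)
  show ?thesis unfolding eqv_def using fin xy xT xc by blast
qed

lemma mul_wd:
  assumes e1: "eqv s b s' b'" and e2: "eqv t c t' c'"
    and c: "s \<in> T" "s' \<in> T" "t \<in> T" "t' \<in> T" "b \<in> carrier A" "b' \<in> carrier A" "c \<in> carrier A" "c' \<in> carrier A"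
    and uv: "u \<in> carrier A" "v \<in> carrier A" "u \<otimes> b = v \<otimes> t" "u \<otimes> s \<in> T"
    and uv': "u' \<in> carrier A" "v' \<in> carrier A" "u' \<otimes> b' = v' \<otimes> t'" "u' \<otimes> s' \<in> T"
  shows "eqv (u \<otimes> s) (v \<otimes> c) (u' \<otimes> s') (v' \<otimes> c')"
proof -
  have sc: "s \<in> carrier A" "s' \<in> carrier A" "t \<in> carrier A" "t' \<in> carrier A" using c Tc by auto
  obtain x y where xy: "x \<in> T" "y \<in> carrier A" "x \<otimes> (u \<otimes> s) = y \<otimes> (u' \<otimes> s')"
    using ore_pair[of "u \<otimes> s" "u' \<otimes> s'"] uv uv' sc by auto
  have xc: "x \<in> carrier A" using xy Tc by auto
  have xT: "x \<otimes> (u \<otimes> s) \<in> T" using T_mult[OF xy(1) uv(4)] .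
  have h1: "(x \<otimes> u) \<otimes> b = (y \<otimes> u') \<otimes> b'"
  proof (rule eqv_all[OF e1 c(1,2,5,6)])
    show "x \<otimes> u \<otimes> s = y \<otimes> u' \<otimes> s'" using xy xc uv uv' sc by (simp add: m_assoc)
    show "x \<otimes> u \<otimes> s \<in> T" using xT xc uv sc by (simp add: m_assoc)
  qed (use xc xy uv uv' in simp_all)
  have h1': "(x \<otimes> v) \<otimes> t = (y \<otimes> v') \<otimes> t'"
  proof -
    have "(x \<otimes> v) \<otimes> t = (x \<otimes> u) \<otimes> b" using xc uv sc c by (simp add: m_assoc)
    also have "\<dots> = (y \<otimes> u') \<otimes> b'" by (rule h1)
    also have "\<dots> = (y \<otimes> v') \<otimes> t'" using xy uv' sc c by (simp add: m_assoc)
    finally show ?thesis .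
  qed
  obtain w w' where ww: "w \<in> T" "w' \<in> carrier A" "w \<otimes> t = w' \<otimes> t'"
    using ore_pair[of t t'] sc c by auto
  have wc: "w \<in> carrier A" using ww Tc by auto
  have wtT: "w \<otimes> t \<in> T" using T_mult[OF ww(1) c(3)] .
  have wc_eq: "w \<otimes> c = w' \<otimes> c'"
    by (rule eqv_all[OF e2 c(3,4,7,8)]) (use ww wc wtT in auto)
  obtain e f where ef: "e \<in> T" "f \<in> carrier A" "e \<otimes> (x \<otimes> v) = f \<otimes> w"
    using ore_pair[of "x \<otimes> v" w] xc uv ww by auto
  have ec: "e \<in> carrier A" using ef Tc by auto
  have k1: "(e \<otimes> y \<otimes> v') \<otimes> t' = (f \<otimes> w') \<otimes> t'"
  proof -
    have "(e \<otimes> y \<otimes> v') \<otimes> t' = e \<otimes> ((y \<otimes> v') \<otimes> t')" using ec xy uv' sc by (simp add: m_assoc)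
    also have "\<dots> = e \<otimes> ((x \<otimes> v) \<otimes> t)" using h1' by simp
    also have "\<dots> = (e \<otimes> (x \<otimes> v)) \<otimes> t" using ec xc uv sc by (simp add: m_assoc)
    also have "\<dots> = (f \<otimes> w) \<otimes> t" using ef by simp
    also have "\<dots> = f \<otimes> (w' \<otimes> t')" using ef wc sc ww by (simp add: m_assoc)
    also have "\<dots> = (f \<otimes> w') \<otimes> t'" using ef sc ww by (simp add: m_assoc)
    finally show ?thesis .
  qed
  have k2: "e \<otimes> y \<otimes> v' = f \<otimes> w'"
    by (rule rcancel[OF c(4) _ _ k1]) (use ec xy uv' ef ww in auto)
  have k3: "x \<otimes> v \<otimes> c = y \<otimes> v' \<otimes> c'"
  proof (rule lcancel[OF ef(1)])
    have "e \<otimes> (x \<otimes> v \<otimes> c) = (e \<otimes> (x \<otimes> v)) \<otimes> c" using ec xc uv c by (simp add: m_assoc)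
    also have "\<dots> = f \<otimes> (w \<otimes> c)" using ef wc c by (simp add: m_assoc)
    also have "\<dots> = f \<otimes> (w' \<otimes> c')" using wc_eq by simp
    also have "\<dots> = (e \<otimes> y \<otimes> v') \<otimes> c'" using k2 ef ww c by (simp add: m_assoc)
    also have "\<dots> = e \<otimes> (y \<otimes> v' \<otimes> c')" using ec xy uv' c by (simp add: m_assoc)
    finally show "e \<otimes> (x \<otimes> v \<otimes> c) = e \<otimes> (y \<otimes> v' \<otimes> c')" .
  qed (use xc xy uv uv' c in auto)
  have fin: "x \<otimes> (v \<otimes> c) = y \<otimes> (v' \<otimes> c')" using k3 xc xy uv uv' c by (simp add: m_assoc)
  show ?thesis unfolding eqv_def using fin xy xT xc by blast
qed

lemma add_frac:
  assumes c: "s \<in> T" "t \<in> T" "b \<in> carrier A" "c \<in> carrier A"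
    and uv: "u \<in> carrier A" "v \<in> carrier A" "u \<otimes> s = v \<otimes> t" "u \<otimes> s \<in> T"
  shows "qadd (frac s b) (frac t c) = frac (u \<otimes> s) (u \<otimes> b \<oplus> v \<otimes> c)"
proof -
  have sc: "s \<in> carrier A" "t \<in> carrier A" using c Tc by auto
  let ?F = "{frac (u1 \<otimes> s1) (u1 \<otimes> b1 \<oplus> v1 \<otimes> c1) | s1 b1 t1 c1 u1 v1. (s1,b1) \<in> frac s b \<and> (t1,c1) \<in> frac t c \<and>
      u1 \<in> carrier A \<and> v1 \<in> carrier A \<and> u1 \<otimes> s1 = v1 \<otimes> t1 \<and> u1 \<otimes> s1 \<in> T}"
  have "?F = {frac (u \<otimes> s) (u \<otimes> b \<oplus> v \<otimes> c)}"
  proof (rule equalityI; rule subsetI)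
    fix Z assume "Z \<in> ?F"
    then obtain s' b' t' c' u' v' where Z: "Z = frac (u' \<otimes> s') (u' \<otimes> b' \<oplus> v' \<otimes> c')"
      and m: "(s',b') \<in> frac s b" "(t',c') \<in> frac t c"
      and uv': "u' \<in> carrier A" "v' \<in> carrier A" "u' \<otimes> s' = v' \<otimes> t'" "u' \<otimes> s' \<in> T"
      by blast
    have m1: "s' \<in> T" "b' \<in> carrier A" "eqv s' b' s b" using m(1) unfolding frac_def by auto
    have m2: "t' \<in> T" "c' \<in> carrier A" "eqv t' c' t c" using m(2) unfolding frac_def by auto
    have "eqv (u' \<otimes> s') (u' \<otimes> b' \<oplus> v' \<otimes> c') (u \<otimes> s) (u \<otimes> b \<oplus> v \<otimes> c)"
      by (rule add_wd[OF m1(3) m2(3)]) (use m1 m2 c uv uv' in auto)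
    then have "Z = frac (u \<otimes> s) (u \<otimes> b \<oplus> v \<otimes> c)"
      unfolding Z by (rule frac_eqI) (use m1 m2 c uv uv' Tc in auto)
    then show "Z \<in> {frac (u \<otimes> s) (u \<otimes> b \<oplus> v \<otimes> c)}" by simp
  next
    fix Z assume "Z \<in> {frac (u \<otimes> s) (u \<otimes> b \<oplus> v \<otimes> c)}"
    then show "Z \<in> ?F" using self_frac c uv by blast
  qed
  then show ?thesis unfolding qadd_def by simp
qed

lemma mul_frac:
  assumes c: "s \<in> T" "t \<in> T" "b \<in> carrier A" "c \<in> carrier A"
    and uv: "u \<in> carrier A" "v \<in> carrier A" "u \<otimes> b = v \<otimes> t" "u \<otimes> s \<in> T"
  shows "qmul (frac s b) (frac t c) = frac (u \<otimes> s) (v \<otimes> c)"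
proof -
  have sc: "s \<in> carrier A" "t \<in> carrier A" using c Tc by auto
  let ?F = "{frac (u1 \<otimes> s1) (v1 \<otimes> c1) | s1 b1 t1 c1 u1 v1. (s1,b1) \<in> frac s b \<and> (t1,c1) \<in> frac t c \<and>
      u1 \<in> carrier A \<and> v1 \<in> carrier A \<and> u1 \<otimes> b1 = v1 \<otimes> t1 \<and> u1 \<otimes> s1 \<in> T}"
  have "?F = {frac (u \<otimes> s) (v \<otimes> c)}"
  proof (rule equalityI; rule subsetI)
    fix Z assume "Z \<in> ?F"
    then obtain s' b' t' c' u' v' where Z: "Z = frac (u' \<otimes> s') (v' \<otimes> c')"
      and m: "(s',b') \<in> frac s b" "(t',c') \<in> frac t c"
      and uv': "u' \<in> carrier A" "v' \<in> carrier A" "u' \<otimes> b' = v' \<otimes> t'" "u' \<otimes> s' \<in> T"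
      by blast
    have m1: "s' \<in> T" "b' \<in> carrier A" "eqv s' b' s b" using m(1) unfolding frac_def by auto
    have m2: "t' \<in> T" "c' \<in> carrier A" "eqv t' c' t c" using m(2) unfolding frac_def by auto
    have "eqv (u' \<otimes> s') (v' \<otimes> c') (u \<otimes> s) (v \<otimes> c)"
      by (rule mul_wd[OF m1(3) m2(3)]) (use m1 m2 c uv uv' in auto)
    then have "Z = frac (u \<otimes> s) (v \<otimes> c)"
      unfolding Z by (rule frac_eqI) (use m1 m2 c uv uv' Tc in auto)
    then show "Z \<in> {frac (u \<otimes> s) (v \<otimes> c)}" by simp
  next
    fix Z assume "Z \<in> {frac (u \<otimes> s) (v \<otimes> c)}"
    then show "Z \<in> ?F" using self_frac c uv by blast
  qed
  then show ?thesis unfolding qmul_def by simp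
qed

lemma add_exists:
  assumes "s \<in> T" "t \<in> T"
  obtains u v where "u \<in> carrier A" "v \<in> carrier A" "u \<otimes> s = v \<otimes> t" "u \<otimes> s \<in> T"
proof -
  obtain u v where "u \<in> T" "v \<in> carrier A" "u \<otimes> s = v \<otimes> t"
    using ore_pair[of s t] assms Tc by auto
  then show ?thesis using that T_mult assms Tc by blast
qed

lemma mul_exists:
  assumes "s \<in> T" "t \<in> T" "b \<in> carrier A"
  obtains u v where "u \<in> carrier A" "v \<in> carrier A" "u \<otimes> b = v \<otimes> t" "u \<otimes> s \<in> T"
proof -
  obtain u v where "u \<in> T" "v \<in> carrier A" "u \<otimes> b = v \<otimes> t"
    using ore_pair[of b t] assms Tc by auto
  then show ?thesis using that T_mult assms Tc by blast
qed

lemma add_same: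
  assumes "d \<in> T" "b \<in> carrier A" "c \<in> carrier A"
  shows "qadd (frac d b) (frac d c) = frac d (b \<oplus> c)"
  using add_frac[of d d b c \<one> \<one>] assms Tc by simp

lemma Qcar_E:
  assumes "X \<in> Qcar"
  obtains s b where "s \<in> T" "b \<in> carrier A" "X = frac s b"
  using assms unfolding Qcar_def by blast

lemma frac_Qcar[simp]: "s \<in> T \<Longrightarrow> b \<in> carrier A \<Longrightarrow> frac s b \<in> Qcar"
  unfolding Qcar_def by blast

lemma common2:
  assumes "X \<in> Qcar" "Y \<in> Qcar"
  obtains d b c where "d \<in> T" "b \<in> carrier A" "c \<in> carrier A" "X = frac d b" "Y = frac d c"
proof -
  obtain s b where sb: "s \<in> T" "b \<in> carrier A" "X = frac s b" using assms(1) by (rule Qcar_E)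
  obtain t c where tc: "t \<in> T" "c \<in> carrier A" "Y = frac t c" using assms(2) by (rule Qcar_E)
  obtain u v where uv: "u \<in> carrier A" "v \<in> carrier A" "u \<otimes> s = v \<otimes> t" "u \<otimes> s \<in> T"
    using add_exists[OF sb(1) tc(1)] by blast
  have "X = frac (u \<otimes> s) (u \<otimes> b)" using frac_expand[of s b u] sb uv by simp
  moreover have "Y = frac (u \<otimes> s) (v \<otimes> c)" using frac_expand[of t c v] tc uv by simp
  ultimately show ?thesis using that uv sb tc by blast
qed

lemma add_closed: "X \<in> Qcar \<Longrightarrow> Y \<in> Qcar \<Longrightarrow> qadd X Y \<in> Qcar"
  by (erule common2, assumption) (simp add: add_same)

lemma mul_closed: "X \<in> Qcar \<Longrightarrow> Y \<in> Qcar \<Longrightarrow> qmul X Y \<in> Qcar"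
proof -
  assume X: "X \<in> Qcar" and Y: "Y \<in> Qcar"
  obtain s b where sb: "s \<in> T" "b \<in> carrier A" "X = frac s b" using X by (rule Qcar_E)
  obtain t c where tc: "t \<in> T" "c \<in> carrier A" "Y = frac t c" using Y by (rule Qcar_E)
  obtain u v where uv: "u \<in> carrier A" "v \<in> carrier A" "u \<otimes> b = v \<otimes> t" "u \<otimes> s \<in> T"
    using mul_exists[OF sb(1) tc(1) sb(2)] by blast
  show ?thesis using mul_frac[OF sb(1) tc(1) sb(2) tc(2) uv] sb tc uv by simp
qed

lemma zero_frac: "d \<in> T \<Longrightarrow> frac d \<zero> = frac \<one> \<zero>"
  using frac_expand[of \<one> \<zero> d] T_one Tc by simp

definition Qring :: "('a \<times> 'a) set ring" where
  "Qring = \<lparr>carrier = Qcar, mult = qmul, one = frac \<one> \<one>, zero = frac \<one> \<zero>, add = qadd\<rparr>"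

lemma Qring_simps[simp]: "carrier Qring = Qcar" "mult Qring = qmul" "one Qring = frac \<one> \<one>"
  "zero Qring = frac \<one> \<zero>" "add Qring = qadd"
  unfolding Qring_def by simp_all

lemma mul_assoc:
  assumes X: "X \<in> Qcar" and Y: "Y \<in> Qcar" and Z: "Z \<in> Qcar"
  shows "qmul (qmul X Y) Z = qmul X (qmul Y Z)"
proof -
  obtain s1 b1 where 1: "s1 \<in> T" "b1 \<in> carrier A" "X = frac s1 b1" using X by (rule Qcar_E)
  obtain s2 b2 where 2: "s2 \<in> T" "b2 \<in> carrier A" "Y = frac s2 b2" using Y by (rule Qcar_E)
  obtain s3 b3 where 3: "s3 \<in> T" "b3 \<in> carrier A" "Z = frac s3 b3" using Z by (rule Qcar_E)
  have sc: "s1 \<in> carrier A" "s2 \<in> carrier A" "s3 \<in> carrier A" using 1 2 3 Tc by auto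
  obtain w z where wz: "w \<in> T" "z \<in> carrier A" "w \<otimes> b2 = z \<otimes> s3"
    using ore_pair[of b2 s3] 2 3 by auto
  have wc: "w \<in> carrier A" using wz Tc by auto
  have ws2: "w \<otimes> s2 \<in> T" using T_mult[OF wz(1) 2(1)] .
  have YZ: "qmul Y Z = frac (w \<otimes> s2) (z \<otimes> b3)"
    using mul_frac[OF 2(1) 3(1) 2(2) 3(2) wc wz(2) wz(3) ws2] 2 3 by simp
  obtain u v where uv: "u \<in> T" "v \<in> carrier A" "u \<otimes> b1 = v \<otimes> (w \<otimes> s2)"
    using ore_pair[of b1 "w \<otimes> s2"] 1 ws2 by auto
  have uc: "u \<in> carrier A" using uv Tc by auto
  have us1: "u \<otimes> s1 \<in> T" using T_mult[OF uv(1) 1(1)] .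
  have R: "qmul X (qmul Y Z) = frac (u \<otimes> s1) (v \<otimes> (z \<otimes> b3))"
    unfolding YZ using mul_frac[OF 1(1) ws2 1(2) _ uc uv(2) uv(3) us1] 1 2 3 wz by simp
  have XY: "qmul X Y = frac (u \<otimes> s1) ((v \<otimes> w) \<otimes> b2)"
    using mul_frac[OF 1(1) 2(1) 1(2) 2(2) uc, of "v \<otimes> w"] uv wc sc us1 1 2 by (simp add: m_assoc)
  have e: "\<one> \<otimes> ((v \<otimes> w) \<otimes> b2) = (v \<otimes> z) \<otimes> s3"
    using uv wz wc sc 2 by (simp add: m_assoc)
  have L: "qmul (qmul X Y) Z = frac (\<one> \<otimes> (u \<otimes> s1)) ((v \<otimes> z) \<otimes> b3)"
    unfolding XY 3(3) by (rule mul_frac) (use e us1 uv wc wz 2 3 Tc in auto)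
  show ?thesis unfolding L R using uc sc uv wz 3 by (simp add: m_assoc)
qed

lemma Qring_ring: "ring Qring"
proof (rule ringI)
  show "abelian_group Qring"
  proof (rule abelian_groupI, unfold Qring_simps)
    show "frac \<one> \<zero> \<in> Qcar" using T_one by simp
  next
    fix X Y assume "X \<in> Qcar" "Y \<in> Qcar"
    then show "qadd X Y \<in> Qcar" by (rule add_closed)
  next
    fix X Y Z assume X: "X \<in> Qcar" and Y: "Y \<in> Qcar" and Z: "Z \<in> Qcar"
    obtain d b c where dbc: "d \<in> T" "b \<in> carrier A" "c \<in> carrier A" "X = frac d b" "Y = frac d c"
      using X Y by (rule common2)
    obtain t e where te: "t \<in> T" "e \<in> carrier A" "Z = frac t e" using Z by (rule Qcar_E)
    obtain u v where uv: "u \<in> carrier A" "v \<in> carrier A" "u \<otimes> d = v \<otimes> t" "u \<otimes> d \<in> T"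
      using add_exists[OF dbc(1) te(1)] by blast
    have X': "X = frac (u \<otimes> d) (u \<otimes> b)" using frac_expand[of d b u] dbc uv by simp
    have Y': "Y = frac (u \<otimes> d) (u \<otimes> c)" using frac_expand[of d c u] dbc uv by simp
    have Z': "Z = frac (u \<otimes> d) (v \<otimes> e)" using frac_expand[of t e v] te uv by simp
    show "qadd (qadd X Y) Z = qadd X (qadd Y Z)"
      unfolding X' Y' Z' using uv dbc te by (simp add: add_same a_assoc)
  next
    fix X Y assume X: "X \<in> Qcar" and Y: "Y \<in> Qcar"
    obtain d b c where dbc: "d \<in> T" "b \<in> carrier A" "c \<in> carrier A" "X = frac d b" "Y = frac d c"
      using X Y by (rule common2)
    show "qadd X Y = qadd Y X" using dbc by (simp add: add_same a_comm)
  next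
    fix X assume X: "X \<in> Qcar"
    obtain s b where sb: "s \<in> T" "b \<in> carrier A" "X = frac s b" using X by (rule Qcar_E)
    have "qadd (frac s \<zero>) (frac s b) = frac s (\<zero> \<oplus> b)" using sb by (simp add: add_same)
    then show "qadd (frac \<one> \<zero>) X = X" using sb zero_frac[of s] by simp
  next
    fix X assume X: "X \<in> Qcar"
    obtain s b where sb: "s \<in> T" "b \<in> carrier A" "X = frac s b" using X by (rule Qcar_E)
    have "qadd (frac s (\<ominus> b)) X = frac \<one> \<zero>" using sb zero_frac[of s] by (simp add: add_same l_neg)
    then show "\<exists>Y\<in>Qcar. qadd Y X = frac \<one> \<zero>" using sb by (intro bexI[of _ "frac s (\<ominus> b)"]) auto
  qed
next
  show "monoid Qring"
  proof (rule monoidI, unfold Qring_simps)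
    show "frac \<one> \<one> \<in> Qcar" using T_one by simp
  next
    fix X Y assume "X \<in> Qcar" "Y \<in> Qcar"
    then show "qmul X Y \<in> Qcar" by (rule mul_closed)
  next
    fix X Y Z assume "X \<in> Qcar" "Y \<in> Qcar" "Z \<in> Qcar"
    then show "qmul (qmul X Y) Z = qmul X (qmul Y Z)" by (rule mul_assoc)
  next
    fix X assume X: "X \<in> Qcar"
    obtain t c where tc: "t \<in> T" "c \<in> carrier A" "X = frac t c" using X by (rule Qcar_E)
    show "qmul (frac \<one> \<one>) X = X"
      using mul_frac[of \<one> t \<one> c t \<one>] tc T_one Tc by simp
  next
    fix X assume X: "X \<in> Qcar"
    obtain s b where sb: "s \<in> T" "b \<in> carrier A" "X = frac s b" using X by (rule Qcar_E)
    show "qmul X (frac \<one> \<one>) = X"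
      using mul_frac[of s \<one> b \<one> \<one> b] sb T_one Tc by simp
  qed
next
  fix X Y Z assume X: "X \<in> carrier Qring" and Y: "Y \<in> carrier Qring" and Z: "Z \<in> carrier Qring"
  obtain s b1 b2 where sb: "s \<in> T" "b1 \<in> carrier A" "b2 \<in> carrier A" "X = frac s b1" "Y = frac s b2"
    using X Y by (auto elim: common2)
  obtain t c where tc: "t \<in> T" "c \<in> carrier A" "Z = frac t c" using Z by (auto elim: Qcar_E)
  have sc: "s \<in> carrier A" "t \<in> carrier A" using sb tc Tc by auto
  show "(X \<oplus>\<^bsub>Qring\<^esub> Y) \<otimes>\<^bsub>Qring\<^esub> Z = X \<otimes>\<^bsub>Qring\<^esub> Z \<oplus>\<^bsub>Qring\<^esub> Y \<otimes>\<^bsub>Qring\<^esub> Z"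
  proof -
    obtain u1 v1 where 1: "u1 \<in> T" "v1 \<in> carrier A" "u1 \<otimes> b1 = v1 \<otimes> t"
      using ore_pair[of b1 t] sb tc by auto
    have u1c: "u1 \<in> carrier A" using 1 Tc by auto
    obtain u2 v2 where 2: "u2 \<in> T" "v2 \<in> carrier A" "u2 \<otimes> (u1 \<otimes> b2) = v2 \<otimes> t"
      using ore_pair[of "u1 \<otimes> b2" t] sb tc u1c by auto
    have u2c: "u2 \<in> carrier A" using 2 Tc by auto
    have UT: "(u2 \<otimes> u1) \<otimes> s \<in> T" using T_mult[OF T_mult[OF 2(1) 1(1)] sb(1)] .
    have e1: "(u2 \<otimes> u1) \<otimes> b1 = (u2 \<otimes> v1) \<otimes> t" using 1 u1c u2c sb sc by (simp add: m_assoc)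
    have e2: "(u2 \<otimes> u1) \<otimes> b2 = v2 \<otimes> t" using 2 u1c u2c sb sc by (simp add: m_assoc)
    have e3: "(u2 \<otimes> u1) \<otimes> (b1 \<oplus> b2) = (u2 \<otimes> v1 \<oplus> v2) \<otimes> t"
      using e1 e2 1 2 u1c u2c sb sc by (simp add: r_distr l_distr)
    have "qmul (qadd X Y) Z = frac ((u2 \<otimes> u1) \<otimes> s) ((u2 \<otimes> v1 \<oplus> v2) \<otimes> c)"
      unfolding sb(4,5) tc(3) using sb tc 1 2 u1c u2c UT e3 by (simp add: add_same mul_frac)
    moreover have "qmul X Z = frac ((u2 \<otimes> u1) \<otimes> s) ((u2 \<otimes> v1) \<otimes> c)"
      unfolding sb(4,5) tc(3) using sb tc 1 2 u1c u2c UT e1 by (simp add: mul_frac)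
    moreover have "qmul Y Z = frac ((u2 \<otimes> u1) \<otimes> s) (v2 \<otimes> c)"
      unfolding sb(4,5) tc(3) using sb tc 1 2 u1c u2c UT e2 by (simp add: mul_frac)
    ultimately show ?thesis using UT 1 2 u2c tc by (simp add: add_same l_distr)
  qed
  show "Z \<otimes>\<^bsub>Qring\<^esub> (X \<oplus>\<^bsub>Qring\<^esub> Y) = Z \<otimes>\<^bsub>Qring\<^esub> X \<oplus>\<^bsub>Qring\<^esub> Z \<otimes>\<^bsub>Qring\<^esub> Y"
  proof -
    obtain u v where uv: "u \<in> T" "v \<in> carrier A" "u \<otimes> c = v \<otimes> s"
      using ore_pair[of c s] sb tc by auto
    have uc: "u \<in> carrier A" using uv Tc by auto
    have ut: "u \<otimes> t \<in> T" using T_mult[OF uv(1) tc(1)] .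
    have "qmul Z (qadd X Y) = frac (u \<otimes> t) (v \<otimes> (b1 \<oplus> b2))"
      unfolding sb(4,5) tc(3) using sb tc uv uc ut by (simp add: add_same mul_frac)
    moreover have "qmul Z X = frac (u \<otimes> t) (v \<otimes> b1)"
      unfolding sb(4,5) tc(3) using sb tc uv uc ut by (simp add: mul_frac)
    moreover have "qmul Z Y = frac (u \<otimes> t) (v \<otimes> b2)"
      unfolding sb(4,5) tc(3) using sb tc uv uc ut by (simp add: mul_frac)
    ultimately show ?thesis using ut uv sb by (simp add: add_same r_distr)
  qed
qed

definition qphi :: "'a \<Rightarrow> ('a \<times> 'a) set" where
  "qphi a = frac \<one> a"

lemma qphi_hom: "qphi \<in> ring_hom A Qring"
proof (rule ring_hom_memI, unfold Qring_simps)
  fix x assume "x \<in> carrier A" then show "qphi x \<in> Qcar" unfolding qphi_def using T_one by simp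
next
  fix x y assume xy: "x \<in> carrier A" "y \<in> carrier A"
  show "qphi (x \<otimes> y) = qmul (qphi x) (qphi y)"
    unfolding qphi_def using mul_frac[of \<one> \<one> x y \<one> x] xy T_one Tc by simp
  show "qphi (x \<oplus> y) = qadd (qphi x) (qphi y)"
    unfolding qphi_def using add_same[of \<one> x y] xy T_one by simp
qed (simp add: qphi_def)

lemma qphi_unit:
  assumes t: "t \<in> T"
  shows "qphi t \<in> Units Qring" "inv\<^bsub>Qring\<^esub> (qphi t) = frac t \<one>"
proof -
  interpret Q: ring Qring by (rule Qring_ring)
  have tc: "t \<in> carrier A" using t Tc by auto
  have 1: "qmul (qphi t) (frac t \<one>) = frac \<one> \<one>"
    unfolding qphi_def using mul_frac[of \<one> t t \<one> \<one> \<one>] t tc T_one by simp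
  have 2: "qmul (frac t \<one>) (qphi t) = frac \<one> \<one>"
  proof -
    have "qmul (frac t \<one>) (qphi t) = frac t t"
      unfolding qphi_def using mul_frac[of t \<one> \<one> t \<one> \<one>] t tc T_one by simp
    also have "\<dots> = frac \<one> \<one>" using frac_expand[of \<one> \<one> t] t tc T_one by simp
    finally show ?thesis .
  qed
  have c: "qphi t \<in> Qcar" "frac t \<one> \<in> Qcar" unfolding qphi_def using t T_one tc by auto
  show "qphi t \<in> Units Qring" unfolding Units_def using 1 2 c by auto
  show "inv\<^bsub>Qring\<^esub> (qphi t) = frac t \<one>"
    using Q.inv_unique'[of "qphi t" "frac t \<one>"] 1 2 c by simp
qed

lemma qphi_lrf: "left_ring_of_fractions A T Qring qphi"
  unfolding left_ring_of_fractions_def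
proof (intro conjI ballI)
  show "ring Qring" by (rule Qring_ring)
  show "qphi \<in> ring_hom A Qring" by (rule qphi_hom)
next
  fix t assume "t \<in> T" then show "qphi t \<in> Units Qring" by (rule qphi_unit)
next
  fix q assume "q \<in> carrier Qring"
  then obtain t a where ta: "t \<in> T" "a \<in> carrier A" "q = frac t a" by (auto elim: Qcar_E)
  have "qmul (frac t \<one>) (qphi a) = frac t a"
    unfolding qphi_def using mul_frac[of t \<one> \<one> a \<one> \<one>] ta T_one Tc by simp
  then show "\<exists>t\<in>T. \<exists>a\<in>carrier A. q = inv\<^bsub>Qring\<^esub> (qphi t) \<otimes>\<^bsub>Qring\<^esub> qphi a"
    using ta qphi_unit(2)[of t] by (intro bexI[of _ t] bexI[of _ a]) auto
next
  fix a assume a: "a \<in> carrier A"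
  show "qphi a = \<zero>\<^bsub>Qring\<^esub> \<longleftrightarrow> (\<exists>t\<in>T. t \<otimes> a = \<zero>)"
  proof
    assume "qphi a = \<zero>\<^bsub>Qring\<^esub>"
    then have "eqv \<one> a \<one> \<zero>" unfolding qphi_def using frac_eq_iff[of \<one> a \<one> \<zero>] a T_one by simp
    then obtain u u' where "u \<in> carrier A" "u' \<in> carrier A" "u = u'" "u \<in> T" "u \<otimes> a = u' \<otimes> \<zero>"
      unfolding eqv_def by auto
    then show "\<exists>t\<in>T. t \<otimes> a = \<zero>" by auto
  next
    assume "\<exists>t\<in>T. t \<otimes> a = \<zero>"
    then have "a = \<zero>" using T_lreg a by blast
    then show "qphi a = \<zero>\<^bsub>Qring\<^esub>" unfolding qphi_def by simp
  qed
qed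

end



locale ore_ctx = ring R for R (structure) +
  fixes S
  assumes ore: "ore_set R S"
begin

lemma S_sub: "S \<subseteq> carrier R" and S_one: "\<one> \<in> S" and S_zero: "\<zero> \<notin> S"
  and S_mult: "s \<in> S \<Longrightarrow> t \<in> S \<Longrightarrow> s \<otimes> t \<in> S"
  using ore unfolding ore_set_def mult_set_def by auto

lemma Sc: "s \<in> S \<Longrightarrow> s \<in> carrier R" using S_sub by auto

lemma ore_l: "r \<in> carrier R \<Longrightarrow> s \<in> S \<Longrightarrow> \<exists>s'\<in>S. \<exists>r'\<in>carrier R. s' \<otimes> r = r' \<otimes> s"
  using ore unfolding ore_set_def by blast

lemma ore_r: "r \<in> carrier R \<Longrightarrow> s \<in> S \<Longrightarrow> \<exists>s'\<in>S. \<exists>r'\<in>carrier R. r \<otimes> s' = s \<otimes> r'"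
  using ore unfolding ore_set_def by blast

abbreviation "fa \<equiv> frak_a R S"

lemma fa_mem: "x \<in> fa \<longleftrightarrow> x \<in> carrier R \<and> (\<exists>s\<in>S. \<exists>t\<in>S. s \<otimes> x \<otimes> t = \<zero>)"
  unfolding frak_a_def by auto

lemma fa_ideal: "ideal fa R"
proof (rule idealI)
  show "ring R" by (rule ring_axioms)
  show "subgroup fa (add_monoid R)"
  proof (rule add.subgroupI)
    show "fa \<subseteq> carrier R" unfolding frak_a_def by auto
    have "\<zero> \<in> fa" unfolding fa_mem using S_one by (intro conjI bexI[of _ \<one>]) auto
    then show "fa \<noteq> {}" by auto
  next
    fix x assume "x \<in> fa"
    then obtain s t where st: "x \<in> carrier R" "s \<in> S" "t \<in> S" "s \<otimes> x \<otimes> t = \<zero>" unfolding fa_mem by auto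
    have "s \<otimes> (\<ominus> x) \<otimes> t = \<ominus> (s \<otimes> x \<otimes> t)" using st Sc by (simp add: r_minus l_minus)
    then show "\<ominus> x \<in> fa" unfolding fa_mem using st by auto
  next
    fix x y assume "x \<in> fa" "y \<in> fa"
    then obtain s1 t1 s2 t2 where st: "x \<in> carrier R" "s1 \<in> S" "t1 \<in> S" "s1 \<otimes> x \<otimes> t1 = \<zero>"
      "y \<in> carrier R" "s2 \<in> S" "t2 \<in> S" "s2 \<otimes> y \<otimes> t2 = \<zero>" unfolding fa_mem by blast
    have c: "s1 \<in> carrier R" "t1 \<in> carrier R" "s2 \<in> carrier R" "t2 \<in> carrier R" using st Sc by auto
    obtain p q where pq: "p \<in> S" "q \<in> carrier R" "t1 \<otimes> p = t2 \<otimes> q" using ore_r[of t1 t2] c st by auto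
    obtain u v where uv: "u \<in> S" "v \<in> carrier R" "u \<otimes> s1 = v \<otimes> s2" using ore_l[of s1 s2] c st by auto
    have pc: "p \<in> carrier R" "u \<in> carrier R" using pq uv Sc by auto
    have e1: "(u \<otimes> s1) \<otimes> x \<otimes> (t1 \<otimes> p) = \<zero>"
    proof -
      have "(u \<otimes> s1) \<otimes> x \<otimes> (t1 \<otimes> p) = u \<otimes> (s1 \<otimes> x \<otimes> t1) \<otimes> p" using c pc st(1) by (simp add: m_assoc)
      also have "\<dots> = \<zero>" by (subst st(4)) (use c pc in simp)
      finally show ?thesis .
    qed
    have e2: "(u \<otimes> s1) \<otimes> y \<otimes> (t1 \<otimes> p) = \<zero>"
    proof -
      have "(u \<otimes> s1) \<otimes> y \<otimes> (t1 \<otimes> p) = v \<otimes> (s2 \<otimes> y \<otimes> t2) \<otimes> q"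
      proof -
        have "(u \<otimes> s1) \<otimes> y \<otimes> (t1 \<otimes> p) = (v \<otimes> s2) \<otimes> y \<otimes> (t2 \<otimes> q)" using pq(3) uv(3) by simp
        also have "\<dots> = v \<otimes> (s2 \<otimes> y \<otimes> t2) \<otimes> q" using c pc st(5) pq(2) uv(2) by (simp add: m_assoc)
        finally show ?thesis .
      qed
      also have "\<dots> = \<zero>" by (subst st(8)) (use c pc pq uv in simp)
      finally show ?thesis .
    qed
    have "(u \<otimes> s1) \<otimes> (x \<oplus> y) \<otimes> (t1 \<otimes> p) = \<zero>"
      using e1 e2 c pc st by (simp add: r_distr l_distr)
    moreover have "u \<otimes> s1 \<in> S" "t1 \<otimes> p \<in> S" using S_mult[OF uv(1) st(2)] S_mult[OF st(3) pq(1)] by auto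
    ultimately show "x \<oplus> y \<in> fa" unfolding fa_mem using st by auto
  qed
next
  fix x r assume "x \<in> fa" "r \<in> carrier R"
  then obtain s t where st: "x \<in> carrier R" "s \<in> S" "t \<in> S" "s \<otimes> x \<otimes> t = \<zero>" "r \<in> carrier R" unfolding fa_mem by auto
  have c: "s \<in> carrier R" "t \<in> carrier R" using st Sc by auto
  obtain u v where uv: "u \<in> S" "v \<in> carrier R" "u \<otimes> r = v \<otimes> s" using ore_l[of r s] st by auto
  have uc: "u \<in> carrier R" using uv Sc by auto
  have "u \<otimes> (r \<otimes> x) \<otimes> t = v \<otimes> (s \<otimes> x \<otimes> t)"
  proof -
    have "u \<otimes> (r \<otimes> x) \<otimes> t = (u \<otimes> r) \<otimes> x \<otimes> t" using uc st by (simp add: m_assoc)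
    also have "\<dots> = v \<otimes> (s \<otimes> x \<otimes> t)" using uv c st(1,5) by (simp add: m_assoc)
    finally show ?thesis .
  qed
  then show "r \<otimes> x \<in> fa" unfolding fa_mem using st uv by auto
  obtain p q where pq: "p \<in> S" "q \<in> carrier R" "r \<otimes> p = t \<otimes> q" using ore_r[of r t] st by auto
  have pc: "p \<in> carrier R" using pq Sc by auto
  have "s \<otimes> (x \<otimes> r) \<otimes> p = (s \<otimes> x \<otimes> t) \<otimes> q"
  proof -
    have "s \<otimes> (x \<otimes> r) \<otimes> p = s \<otimes> x \<otimes> (r \<otimes> p)" using pc c st(1,5) by (simp add: m_assoc)
    also have "\<dots> = (s \<otimes> x \<otimes> t) \<otimes> q" using pq c st(1,5) by (simp add: m_assoc)
    finally show ?thesis .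
  qed
  then show "x \<otimes> r \<in> fa" unfolding fa_mem using st pq by auto
qed

lemma fa_lcancel: "s \<in> S \<Longrightarrow> x \<in> carrier R \<Longrightarrow> s \<otimes> x \<in> fa \<Longrightarrow> x \<in> fa"
proof -
  assume a: "s \<in> S" "x \<in> carrier R" "s \<otimes> x \<in> fa"
  then obtain p q where "p \<in> S" "q \<in> S" "p \<otimes> (s \<otimes> x) \<otimes> q = \<zero>" unfolding fa_mem by auto
  moreover have "p \<otimes> (s \<otimes> x) \<otimes> q = (p \<otimes> s) \<otimes> x \<otimes> q" using a calculation Sc by (simp add: m_assoc)
  ultimately show "x \<in> fa" unfolding fa_mem using a S_mult by auto
qed

lemma fa_rcancel: "s \<in> S \<Longrightarrow> x \<in> carrier R \<Longrightarrow> x \<otimes> s \<in> fa \<Longrightarrow> x \<in> fa"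
proof -
  assume a: "s \<in> S" "x \<in> carrier R" "x \<otimes> s \<in> fa"
  then obtain p q where "p \<in> S" "q \<in> S" "p \<otimes> (x \<otimes> s) \<otimes> q = \<zero>" unfolding fa_mem by auto
  moreover have "p \<otimes> (x \<otimes> s) \<otimes> q = p \<otimes> x \<otimes> (s \<otimes> q)" using a calculation Sc by (simp add: m_assoc)
  ultimately show "x \<in> fa" unfolding fa_mem using a S_mult by auto
qed

lemma S_fa: "s \<in> S \<Longrightarrow> s \<notin> fa"
proof
  assume "s \<in> S" "s \<in> fa"
  then obtain p q where "p \<in> S" "q \<in> S" "p \<otimes> s \<otimes> q = \<zero>" unfolding fa_mem by auto
  then show False using S_mult S_zero \<open>s \<in> S\<close> by metis
qed

interpretation FA: ideal fa R by (rule fa_ideal)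

abbreviation "Abar \<equiv> R Quot fa"
abbreviation "Tbar \<equiv> (\<lambda>r. a_r_coset R fa r) ` S"

lemma Abar_ring: "ring Abar" by (rule FA.quotient_is_ring)

lemma Abar_mult: "x \<in> carrier R \<Longrightarrow> y \<in> carrier R \<Longrightarrow> (fa +> x) \<otimes>\<^bsub>Abar\<^esub> (fa +> y) = fa +> (x \<otimes> y)"
  by (simp add: FactRing_def FA.rcoset_mult_add)

lemma Abar_add: "x \<in> carrier R \<Longrightarrow> y \<in> carrier R \<Longrightarrow> (fa +> x) \<oplus>\<^bsub>Abar\<^esub> (fa +> y) = fa +> (x \<oplus> y)"
  by (simp add: FactRing_def FA.a_rcos_sum)

lemma Abar_zero: "\<zero>\<^bsub>Abar\<^esub> = fa" and Abar_one: "\<one>\<^bsub>Abar\<^esub> = fa +> \<one>"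
  by (simp_all add: FactRing_def)

lemma Abar_carrier: "carrier Abar = {fa +> x | x. x \<in> carrier R}"
  by (auto simp: FactRing_def A_RCOSETS_def')

lemma Abar_cosetI: "x \<in> carrier R \<Longrightarrow> fa +> x \<in> carrier Abar"
  by (auto simp: Abar_carrier)

lemma Abar_is_zero: "x \<in> carrier R \<Longrightarrow> fa +> x = fa \<longleftrightarrow> x \<in> fa"
  using FA.rcos_const_imp_mem a_rcos_zero[OF fa_ideal] by blast

lemma ore_reg_Abar: "ore_reg Abar Tbar"
proof -
  interpret A: ring Abar by (rule Abar_ring)
  show ?thesis
  proof (unfold_locales)
    show "Tbar \<subseteq> carrier Abar" using Abar_cosetI Sc by auto
    show "\<one>\<^bsub>Abar\<^esub> \<in> Tbar" using S_one Abar_one by auto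
  next
    fix s t assume "s \<in> Tbar" "t \<in> Tbar"
    then show "s \<otimes>\<^bsub>Abar\<^esub> t \<in> Tbar" using Abar_mult S_mult Sc by auto
  next
    fix X t assume X: "X \<in> carrier Abar" and t: "t \<in> Tbar"
    obtain x where x: "x \<in> carrier R" "X = fa +> x" using X by (auto simp: Abar_carrier)
    obtain t0 where t0: "t0 \<in> S" "t = fa +> t0" using t by auto
    obtain s' r' where sr: "s' \<in> S" "r' \<in> carrier R" "s' \<otimes> x = r' \<otimes> t0" using ore_l[of x t0] x t0 by auto
    show "\<exists>t'\<in>Tbar. \<exists>a'\<in>carrier Abar. t' \<otimes>\<^bsub>Abar\<^esub> X = a' \<otimes>\<^bsub>Abar\<^esub> t"
      using sr x t0 Sc Abar_mult Abar_cosetI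
      by (intro bexI[of _ "fa +> s'"] bexI[of _ "fa +> r'"]) auto
  next
    fix t X assume t: "t \<in> Tbar" and X: "X \<in> carrier Abar" and z: "t \<otimes>\<^bsub>Abar\<^esub> X = \<zero>\<^bsub>Abar\<^esub>"
    obtain x where x: "x \<in> carrier R" "X = fa +> x" using X by (auto simp: Abar_carrier)
    obtain t0 where t0: "t0 \<in> S" "t = fa +> t0" using t by auto
    have "fa +> (t0 \<otimes> x) = fa" using z x t0 Abar_mult Abar_zero Sc by simp
    then have "t0 \<otimes> x \<in> fa" using Abar_is_zero x t0 Sc by auto
    then have "x \<in> fa" using fa_lcancel t0 x by auto
    then show "X = \<zero>\<^bsub>Abar\<^esub>" using x Abar_is_zero Abar_zero by auto
  next
    fix t X assume t: "t \<in> Tbar" and X: "X \<in> carrier Abar" and z: "X \<otimes>\<^bsub>Abar\<^esub> t = \<zero>\<^bsub>Abar\<^esub>"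
    obtain x where x: "x \<in> carrier R" "X = fa +> x" using X by (auto simp: Abar_carrier)
    obtain t0 where t0: "t0 \<in> S" "t = fa +> t0" using t by auto
    have "fa +> (x \<otimes> t0) = fa" using z x t0 Abar_mult Abar_zero Sc by simp
    then have "x \<otimes> t0 \<in> fa" using Abar_is_zero x t0 Sc by auto
    then have "x \<in> fa" using fa_rcancel t0 x by auto
    then show "X = \<zero>\<^bsub>Abar\<^esub>" using x Abar_is_zero Abar_zero by auto
  qed
qed

lemma left_den_Abar: "left_denominator_set Abar Tbar"
proof -
  interpret O: ore_reg Abar Tbar by (rule ore_reg_Abar)
  show ?thesis unfolding left_denominator_set_def
  proof (intro conjI ballI impI)
    show "Tbar \<subseteq> carrier Abar" by (rule O.T_sub)
    show "\<one>\<^bsub>Abar\<^esub> \<in> Tbar" by (rule O.T_one)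
  next
    fix s t assume "s \<in> Tbar" "t \<in> Tbar" then show "s \<otimes>\<^bsub>Abar\<^esub> t \<in> Tbar" by (rule O.T_mult)
  next
    fix a t assume "a \<in> carrier Abar" "t \<in> Tbar"
    then show "\<exists>t'\<in>Tbar. \<exists>a'\<in>carrier Abar. t' \<otimes>\<^bsub>Abar\<^esub> a = a' \<otimes>\<^bsub>Abar\<^esub> t" by (rule O.T_ore)
  next
    fix a t assume "a \<in> carrier Abar" "t \<in> Tbar" "a \<otimes>\<^bsub>Abar\<^esub> t = \<zero>\<^bsub>Abar\<^esub>"
    then have "a = \<zero>\<^bsub>Abar\<^esub>" using O.T_rreg by blast
    then show "\<exists>t'\<in>Tbar. t' \<otimes>\<^bsub>Abar\<^esub> a = \<zero>\<^bsub>Abar\<^esub>" using O.T_one by (intro bexI[of _ "\<one>\<^bsub>Abar\<^esub>"]) auto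
  qed
qed

end



context ore_ctx
begin

abbreviation "FF \<equiv> loc_free R S"
abbreviation "II \<equiv> loc_ideal R S"
abbreviation "LL \<equiv> loc_ring R S"
abbreviation "lm \<equiv> loc_map R S"
abbreviation "lx \<equiv> loc_x R S"

lemma FF_ring: "ring FF" unfolding loc_free_def by (rule free_ring_is_ring)

interpretation F: ring FF by (rule FF_ring)

lemma letter_l_carr: "r \<in> carrier R \<Longrightarrow> letter (Inl r) \<in> carrier FF"
  unfolding loc_free_def letter_delta by (rule delta_carrier) (auto simp: loc_alph_def)

lemma letter_r_carr: "s \<in> S \<Longrightarrow> letter (Inr s) \<in> carrier FF"
  unfolding loc_free_def letter_delta by (rule delta_carrier) (auto simp: loc_alph_def)

lemma FF_diff: "f \<in> carrier FF \<Longrightarrow> h \<in> carrier FF \<Longrightarrow> f \<ominus>\<^bsub>FF\<^esub> h = (\<lambda>w. f w - h w)"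
  unfolding loc_free_def a_minus_def by (simp add: free_neg free_simps)

lemma FF_add: "f \<oplus>\<^bsub>FF\<^esub> h = (\<lambda>w. f w + h w)"
  unfolding loc_free_def by (simp add: free_simps)

lemma FF_one_carr: "\<one>\<^bsub>FF\<^esub> \<in> carrier FF" by simp

lemma rels_carr: "loc_rels R S \<subseteq> carrier FF"
proof -
  have d: "(\<lambda>w. f w - h w) \<in> carrier FF" if "f \<in> carrier FF" "h \<in> carrier FF" for f h
    using FF_diff[OF that] F.minus_closed[OF that] by simp
  have d3: "(\<lambda>w. f w - h w - k w) \<in> carrier FF" if "f \<in> carrier FF" "h \<in> carrier FF" "k \<in> carrier FF" for f h k
    using d[OF d[OF that(1,2)] that(3)] by simp
  have l: "letter (Inl r) \<in> carrier FF" if "r \<in> carrier R" for r using letter_l_carr that .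
  have x: "letter (Inr s) \<in> carrier FF" if "s \<in> S" for s using letter_r_carr that .
  show ?thesis unfolding loc_rels_def
  proof (intro Un_least subsetI)
    fix z :: "('a + 'a) list \<Rightarrow> int" assume "z \<in> {(\<lambda>w. letter (Inl (r \<oplus> r')) w - letter (Inl r) w - letter (Inl r') w) |r r'. r \<in> carrier R \<and> r' \<in> carrier R}"
    then obtain r r' where "r \<in> carrier R" "r' \<in> carrier R" "z = (\<lambda>w. letter (Inl (r \<oplus> r')) w - letter (Inl r) w - letter (Inl r') w)" by blast
    then show "z \<in> carrier FF" using d3[OF l l l] by simp
  next
    fix z :: "('a + 'a) list \<Rightarrow> int" assume "z \<in> {(\<lambda>w. letter (Inl (r \<otimes> r')) w - (letter (Inl r) \<otimes>\<^bsub>FF\<^esub> letter (Inl r')) w) |r r'. r \<in> carrier R \<and> r' \<in> carrier R}"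
    then obtain r r' where "r \<in> carrier R" "r' \<in> carrier R" "z = (\<lambda>w. letter (Inl (r \<otimes> r')) w - (letter (Inl r) \<otimes>\<^bsub>FF\<^esub> letter (Inl r')) w)" by blast
    then show "z \<in> carrier FF" using d[OF l F.m_closed[OF l l]] by simp
  next
    fix z :: "('a + 'a) list \<Rightarrow> int" assume "z \<in> {(\<lambda>w. letter (Inl \<one>) w - \<one>\<^bsub>FF\<^esub> w)}"
    then show "z \<in> carrier FF" using d[OF l F.one_closed] by simp
  next
    fix z :: "('a + 'a) list \<Rightarrow> int" assume "z \<in> {(\<lambda>w. (letter (Inl s) \<otimes>\<^bsub>FF\<^esub> letter (Inr s)) w - \<one>\<^bsub>FF\<^esub> w) |s. s \<in> S}"
    then obtain s where "s \<in> S" "z = (\<lambda>w. (letter (Inl s) \<otimes>\<^bsub>FF\<^esub> letter (Inr s)) w - \<one>\<^bsub>FF\<^esub> w)" by blast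
    then show "z \<in> carrier FF" using d[OF F.m_closed[OF l x] F.one_closed] Sc by simp
  next
    fix z :: "('a + 'a) list \<Rightarrow> int" assume "z \<in> {(\<lambda>w. (letter (Inr s) \<otimes>\<^bsub>FF\<^esub> letter (Inl s)) w - \<one>\<^bsub>FF\<^esub> w) |s. s \<in> S}"
    then obtain s where "s \<in> S" "z = (\<lambda>w. (letter (Inr s) \<otimes>\<^bsub>FF\<^esub> letter (Inl s)) w - \<one>\<^bsub>FF\<^esub> w)" by blast
    then show "z \<in> carrier FF" using d[OF F.m_closed[OF x l] F.one_closed] Sc by simp
  qed
qed

lemma II_ideal: "ideal II FF"
  unfolding loc_ideal_def by (rule F.genideal_ideal[OF rels_carr])

lemma rels_II: "loc_rels R S \<subseteq> II"
  unfolding loc_ideal_def by (rule F.genideal_self[OF rels_carr])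

interpretation I: ideal II FF by (rule II_ideal)

lemma LL_ring: "ring LL" unfolding loc_ring_def by (rule I.quotient_is_ring)

interpretation L: ring LL by (rule LL_ring)

lemma LL_mult: "f \<in> carrier FF \<Longrightarrow> h \<in> carrier FF \<Longrightarrow> (II +>\<^bsub>FF\<^esub> f) \<otimes>\<^bsub>LL\<^esub> (II +>\<^bsub>FF\<^esub> h) = II +>\<^bsub>FF\<^esub> (f \<otimes>\<^bsub>FF\<^esub> h)"
  unfolding loc_ring_def by (simp add: FactRing_def I.rcoset_mult_add)

lemma LL_add: "f \<in> carrier FF \<Longrightarrow> h \<in> carrier FF \<Longrightarrow> (II +>\<^bsub>FF\<^esub> f) \<oplus>\<^bsub>LL\<^esub> (II +>\<^bsub>FF\<^esub> h) = II +>\<^bsub>FF\<^esub> (f \<oplus>\<^bsub>FF\<^esub> h)"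
  unfolding loc_ring_def by (simp add: FactRing_def I.a_rcos_sum)

lemma LL_zero: "\<zero>\<^bsub>LL\<^esub> = II" and LL_one: "\<one>\<^bsub>LL\<^esub> = II +>\<^bsub>FF\<^esub> \<one>\<^bsub>FF\<^esub>"
  unfolding loc_ring_def by (simp_all add: FactRing_def)

lemma LL_carrier: "carrier LL = {II +>\<^bsub>FF\<^esub> f | f. f \<in> carrier FF}"
  unfolding loc_ring_def by (auto simp: FactRing_def A_RCOSETS_def')

lemma LL_cosetI: "f \<in> carrier FF \<Longrightarrow> II +>\<^bsub>FF\<^esub> f \<in> carrier LL"
  by (auto simp: LL_carrier)

lemma modI:
  assumes f: "f \<in> carrier FF" and h: "h \<in> carrier FF" and d: "(\<lambda>w. f w - h w) \<in> II"
  shows "II +>\<^bsub>FF\<^esub> f = II +>\<^bsub>FF\<^esub> h"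
proof -
  have "f \<ominus>\<^bsub>FF\<^esub> h \<in> II" using d FF_diff[OF f h] by simp
  then have "f \<in> II +>\<^bsub>FF\<^esub> h" using I.a_rcos_module_minus[OF FF_ring h f] by simp
  then show ?thesis using I.a_repr_independence' h by simp
qed

lemma lm_carr: "r \<in> carrier R \<Longrightarrow> lm r \<in> carrier LL"
  unfolding loc_map_def by (rule LL_cosetI[OF letter_l_carr])

lemma lx_carr: "s \<in> S \<Longrightarrow> lx s \<in> carrier LL"
  unfolding loc_x_def by (rule LL_cosetI[OF letter_r_carr])

lemma lm_add: "r \<in> carrier R \<Longrightarrow> r' \<in> carrier R \<Longrightarrow> lm (r \<oplus> r') = lm r \<oplus>\<^bsub>LL\<^esub> lm r'"
proof -
  assume rr: "r \<in> carrier R" "r' \<in> carrier R"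
  have "(\<lambda>w. letter (Inl (r \<oplus> r')) w - letter (Inl r) w - letter (Inl r') w) \<in> loc_rels R S"
    unfolding loc_rels_def by (rule UnI1, rule UnI1, rule UnI1, rule UnI1, rule CollectI, rule exI[of _ r], rule exI[of _ r']) (simp add: rr)
  then have "(\<lambda>w. letter (Inl (r \<oplus> r')) w - letter (Inl r) w - letter (Inl r') w) \<in> II"
    using rels_II by (rule subsetD[rotated])
  moreover have "(\<lambda>w. letter (Inl (r \<oplus> r')) w - (letter (Inl r) \<oplus>\<^bsub>FF\<^esub> letter (Inl r')) w)
      = (\<lambda>w. letter (Inl (r \<oplus> r')) w - letter (Inl r) w - letter (Inl r') w)"
    by (simp add: FF_add fun_eq_iff)
  ultimately have "II +>\<^bsub>FF\<^esub> letter (Inl (r \<oplus> r')) = II +>\<^bsub>FF\<^esub> (letter (Inl r) \<oplus>\<^bsub>FF\<^esub> letter (Inl r'))"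
    using rr by (intro modI) (auto simp: letter_l_carr)
  then show ?thesis unfolding loc_map_def using rr by (simp add: LL_add letter_l_carr)
qed

lemma lm_mult: "r \<in> carrier R \<Longrightarrow> r' \<in> carrier R \<Longrightarrow> lm (r \<otimes> r') = lm r \<otimes>\<^bsub>LL\<^esub> lm r'"
proof -
  assume rr: "r \<in> carrier R" "r' \<in> carrier R"
  have "(\<lambda>w. letter (Inl (r \<otimes> r')) w - (letter (Inl r) \<otimes>\<^bsub>FF\<^esub> letter (Inl r')) w) \<in> loc_rels R S"
    unfolding loc_rels_def by (rule UnI1, rule UnI1, rule UnI1, rule UnI2, rule CollectI, rule exI[of _ r], rule exI[of _ r']) (simp add: rr)
  then have "(\<lambda>w. letter (Inl (r \<otimes> r')) w - (letter (Inl r) \<otimes>\<^bsub>FF\<^esub> letter (Inl r')) w) \<in> II"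
    using rels_II by (rule subsetD[rotated])
  then have "II +>\<^bsub>FF\<^esub> letter (Inl (r \<otimes> r')) = II +>\<^bsub>FF\<^esub> (letter (Inl r) \<otimes>\<^bsub>FF\<^esub> letter (Inl r'))"
    using rr by (intro modI) (auto simp: letter_l_carr)
  then show ?thesis unfolding loc_map_def using rr by (simp add: LL_mult letter_l_carr)
qed

lemma lm_one: "lm \<one> = \<one>\<^bsub>LL\<^esub>"
proof -
  have "(\<lambda>w. letter (Inl \<one>) w - \<one>\<^bsub>FF\<^esub> w) \<in> loc_rels R S"
    unfolding loc_rels_def by (rule UnI1, rule UnI1, rule UnI2, rule singletonI)
  then have "(\<lambda>w. letter (Inl \<one>) w - \<one>\<^bsub>FF\<^esub> w) \<in> II"
    using rels_II by (rule subsetD[rotated])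
  then have "II +>\<^bsub>FF\<^esub> letter (Inl \<one>) = II +>\<^bsub>FF\<^esub> \<one>\<^bsub>FF\<^esub>"
    by (intro modI) (auto simp: letter_l_carr)
  then show ?thesis unfolding loc_map_def by (simp add: LL_one)
qed

lemma lm_lx: "s \<in> S \<Longrightarrow> lm s \<otimes>\<^bsub>LL\<^esub> lx s = \<one>\<^bsub>LL\<^esub>"
proof -
  assume s: "s \<in> S"
  have "(\<lambda>w. (letter (Inl s) \<otimes>\<^bsub>FF\<^esub> letter (Inr s)) w - \<one>\<^bsub>FF\<^esub> w) \<in> loc_rels R S"
    unfolding loc_rels_def by (rule UnI1, rule UnI2, rule CollectI, rule exI[of _ s]) (simp add: s)
  then have "(\<lambda>w. (letter (Inl s) \<otimes>\<^bsub>FF\<^esub> letter (Inr s)) w - \<one>\<^bsub>FF\<^esub> w) \<in> II"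
    using rels_II by (rule subsetD[rotated])
  then have "II +>\<^bsub>FF\<^esub> (letter (Inl s) \<otimes>\<^bsub>FF\<^esub> letter (Inr s)) = II +>\<^bsub>FF\<^esub> \<one>\<^bsub>FF\<^esub>"
    using s by (intro modI) (auto simp: letter_l_carr letter_r_carr Sc)
  then show ?thesis unfolding loc_map_def loc_x_def using s by (simp add: LL_one LL_mult letter_l_carr letter_r_carr Sc)
qed

lemma lx_lm: "s \<in> S \<Longrightarrow> lx s \<otimes>\<^bsub>LL\<^esub> lm s = \<one>\<^bsub>LL\<^esub>"
proof -
  assume s: "s \<in> S"
  have "(\<lambda>w. (letter (Inr s) \<otimes>\<^bsub>FF\<^esub> letter (Inl s)) w - \<one>\<^bsub>FF\<^esub> w) \<in> loc_rels R S"
    unfolding loc_rels_def by (rule UnI2, rule CollectI, rule exI[of _ s]) (simp add: s)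
  then have "(\<lambda>w. (letter (Inr s) \<otimes>\<^bsub>FF\<^esub> letter (Inl s)) w - \<one>\<^bsub>FF\<^esub> w) \<in> II"
    using rels_II by (rule subsetD[rotated])
  then have "II +>\<^bsub>FF\<^esub> (letter (Inr s) \<otimes>\<^bsub>FF\<^esub> letter (Inl s)) = II +>\<^bsub>FF\<^esub> \<one>\<^bsub>FF\<^esub>"
    using s by (intro modI) (auto simp: letter_l_carr letter_r_carr Sc)
  then show ?thesis unfolding loc_map_def loc_x_def using s by (simp add: LL_one LL_mult letter_l_carr letter_r_carr Sc)
qed

lemma lm_zero: "lm \<zero> = \<zero>\<^bsub>LL\<^esub>"
proof -
  have "lm \<zero> = lm (\<zero> \<oplus> \<zero>)" by simp
  also have "\<dots> = lm \<zero> \<oplus>\<^bsub>LL\<^esub> lm \<zero>" by (rule lm_add) auto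
  finally show ?thesis using lm_carr[of \<zero>] L.add.l_cancel_one' by simp
qed

lemma lm_neg: "r \<in> carrier R \<Longrightarrow> lm (\<ominus> r) = \<ominus>\<^bsub>LL\<^esub> lm r"
proof -
  assume r: "r \<in> carrier R"
  have "lm (\<ominus> r) \<oplus>\<^bsub>LL\<^esub> lm r = \<zero>\<^bsub>LL\<^esub>" using r lm_add[of "\<ominus> r" r] by (simp add: l_neg lm_zero)
  then show ?thesis using r lm_carr by (intro L.minus_equality[symmetric]) auto
qed

end



lemma hom_neg:
  assumes "ring A" "ring B" "h \<in> ring_hom A B" "x \<in> carrier A"
  shows "h (\<ominus>\<^bsub>A\<^esub> x) = \<ominus>\<^bsub>B\<^esub> h x"
proof -
  interpret hr: ring_hom_ring A B h using assms by (intro ring_hom_ringI2)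
  show ?thesis using assms(4) by simp
qed

context ore_ctx
begin

interpretation F: ring FF by (rule FF_ring)
interpretation I: ideal II FF by (rule II_ideal)
interpretation L: ring LL by (rule LL_ring)

lemma lm_lx': "s \<in> S \<Longrightarrow> z \<in> carrier LL \<Longrightarrow> lm s \<otimes>\<^bsub>LL\<^esub> (lx s \<otimes>\<^bsub>LL\<^esub> z) = z"
  using lm_lx[of s] lm_carr[of s] lx_carr[of s] Sc by (simp add: L.m_assoc[symmetric])

lemma lx_lm': "s \<in> S \<Longrightarrow> z \<in> carrier LL \<Longrightarrow> lx s \<otimes>\<^bsub>LL\<^esub> (lm s \<otimes>\<^bsub>LL\<^esub> z) = z"
  using lx_lm[of s] lm_carr[of s] lx_carr[of s] Sc by (simp add: L.m_assoc[symmetric])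

lemma lx_mult:
  assumes s: "s \<in> S" and t: "t \<in> S"
  shows "lx (t \<otimes> s) = lx s \<otimes>\<^bsub>LL\<^esub> lx t"
proof -
  have ts: "t \<otimes> s \<in> S" using S_mult s t by auto
  have c: "lx s \<in> carrier LL" "lx t \<in> carrier LL" "lx (t \<otimes> s) \<in> carrier LL" "lm s \<in> carrier LL" "lm t \<in> carrier LL"
    using s t ts lx_carr lm_carr Sc by auto
  have z: "lx s \<otimes>\<^bsub>LL\<^esub> lx t \<in> carrier LL" using c by simp
  have "lm (t \<otimes> s) \<otimes>\<^bsub>LL\<^esub> (lx s \<otimes>\<^bsub>LL\<^esub> lx t) = (lm t \<otimes>\<^bsub>LL\<^esub> lm s) \<otimes>\<^bsub>LL\<^esub> (lx s \<otimes>\<^bsub>LL\<^esub> lx t)"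
    using lm_mult[of t s] s t Sc by simp
  also have "\<dots> = lm t \<otimes>\<^bsub>LL\<^esub> (lm s \<otimes>\<^bsub>LL\<^esub> (lx s \<otimes>\<^bsub>LL\<^esub> lx t))"
    using c z by (simp only: L.m_assoc)
  also have "\<dots> = lm t \<otimes>\<^bsub>LL\<^esub> lx t" using lm_lx'[OF s c(2)] by simp
  also have "\<dots> = \<one>\<^bsub>LL\<^esub>" using lm_lx[OF t] .
  finally have e: "lm (t \<otimes> s) \<otimes>\<^bsub>LL\<^esub> (lx s \<otimes>\<^bsub>LL\<^esub> lx t) = \<one>\<^bsub>LL\<^esub>" .
  have "lx s \<otimes>\<^bsub>LL\<^esub> lx t = lx (t \<otimes> s) \<otimes>\<^bsub>LL\<^esub> (lm (t \<otimes> s) \<otimes>\<^bsub>LL\<^esub> (lx s \<otimes>\<^bsub>LL\<^esub> lx t))"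
    using lx_lm'[OF ts z] by (rule sym)
  also have "\<dots> = lx (t \<otimes> s)" unfolding e by (rule L.r_one[OF c(3)])
  finally show ?thesis by (rule sym)
qed

definition NL :: "(('a + 'a) list \<Rightarrow> int) set \<Rightarrow> bool" where
  "NL X \<longleftrightarrow> (\<exists>s\<in>S. \<exists>r\<in>carrier R. X = lx s \<otimes>\<^bsub>LL\<^esub> lm r)"

definition NR :: "(('a + 'a) list \<Rightarrow> int) set \<Rightarrow> bool" where
  "NR X \<longleftrightarrow> (\<exists>s\<in>S. \<exists>r\<in>carrier R. X = lm r \<otimes>\<^bsub>LL\<^esub> lx s)"

lemma NL_one: "NL \<one>\<^bsub>LL\<^esub>"
proof -
  have "\<one>\<^bsub>LL\<^esub> = lx \<one> \<otimes>\<^bsub>LL\<^esub> lm \<one>" using lx_lm[OF S_one] by (rule sym)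
  then show ?thesis unfolding NL_def using S_one one_closed by blast
qed

lemma NR_one: "NR \<one>\<^bsub>LL\<^esub>"
proof -
  have "\<one>\<^bsub>LL\<^esub> = lm \<one> \<otimes>\<^bsub>LL\<^esub> lx \<one>" using lm_lx[OF S_one] by (rule sym)
  then show ?thesis unfolding NR_def using S_one one_closed by blast
qed

lemma NL_zero: "NL \<zero>\<^bsub>LL\<^esub>"
proof -
  have "\<zero>\<^bsub>LL\<^esub> = lx \<one> \<otimes>\<^bsub>LL\<^esub> lm \<zero>" unfolding lm_zero using lx_carr[OF S_one] by (rule L.r_null[symmetric])
  then show ?thesis unfolding NL_def using S_one zero_closed by blast
qed

lemma NR_zero: "NR \<zero>\<^bsub>LL\<^esub>"
proof -
  have "\<zero>\<^bsub>LL\<^esub> = lm \<zero> \<otimes>\<^bsub>LL\<^esub> lx \<one>" unfolding lm_zero using lx_carr[OF S_one] by (rule L.l_null[symmetric])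
  then show ?thesis unfolding NR_def using S_one zero_closed by blast
qed

lemma NL_neg: "NL X \<Longrightarrow> NL (\<ominus>\<^bsub>LL\<^esub> X)"
proof -
  assume "NL X"
  then obtain s r where sr: "s \<in> S" "r \<in> carrier R" "X = lx s \<otimes>\<^bsub>LL\<^esub> lm r" unfolding NL_def by blast
  have "\<ominus>\<^bsub>LL\<^esub> X = lx s \<otimes>\<^bsub>LL\<^esub> lm (\<ominus> r)"
    using sr lm_neg[of r] lx_carr lm_carr by (simp add: L.r_minus)
  then show ?thesis unfolding NL_def using sr by blast
qed

lemma NR_neg: "NR X \<Longrightarrow> NR (\<ominus>\<^bsub>LL\<^esub> X)"
proof -
  assume "NR X"
  then obtain s r where sr: "s \<in> S" "r \<in> carrier R" "X = lm r \<otimes>\<^bsub>LL\<^esub> lx s" unfolding NR_def by blast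
  have "\<ominus>\<^bsub>LL\<^esub> X = lm (\<ominus> r) \<otimes>\<^bsub>LL\<^esub> lx s"
    using sr lm_neg[of r] lx_carr lm_carr by (simp add: L.l_minus)
  then show ?thesis unfolding NR_def using sr by blast
qed

lemma NL_lx_mul: "s \<in> S \<Longrightarrow> NL X \<Longrightarrow> NL (lx s \<otimes>\<^bsub>LL\<^esub> X)"
proof -
  assume s: "s \<in> S" and "NL X"
  then obtain t r where tr: "t \<in> S" "r \<in> carrier R" "X = lx t \<otimes>\<^bsub>LL\<^esub> lm r" unfolding NL_def by blast
  have "lx s \<otimes>\<^bsub>LL\<^esub> X = lx (t \<otimes> s) \<otimes>\<^bsub>LL\<^esub> lm r"
    using tr s lx_mult[OF s tr(1)] lx_carr lm_carr by (simp add: L.m_assoc)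
  then show ?thesis unfolding NL_def using tr s S_mult by blast
qed

lemma NL_lm_mul: "r0 \<in> carrier R \<Longrightarrow> NL X \<Longrightarrow> NL (lm r0 \<otimes>\<^bsub>LL\<^esub> X)"
proof -
  assume r0: "r0 \<in> carrier R" and "NL X"
  then obtain t r where tr: "t \<in> S" "r \<in> carrier R" "X = lx t \<otimes>\<^bsub>LL\<^esub> lm r" unfolding NL_def by blast
  obtain u v where uv: "u \<in> S" "v \<in> carrier R" "u \<otimes> r0 = v \<otimes> t" using ore_l[OF r0 tr(1)] by blast
  have c: "lx t \<in> carrier LL" "lm t \<in> carrier LL" "lx u \<in> carrier LL" "lm u \<in> carrier LL"
    "lm v \<in> carrier LL" "lm r0 \<in> carrier LL" "lm r \<in> carrier LL"
    using tr uv r0 lx_carr lm_carr Sc by auto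
  have key: "lm r0 \<otimes>\<^bsub>LL\<^esub> lx t = lx u \<otimes>\<^bsub>LL\<^esub> lm v"
  proof -
    have "lx u \<otimes>\<^bsub>LL\<^esub> lm v = lx u \<otimes>\<^bsub>LL\<^esub> (lm v \<otimes>\<^bsub>LL\<^esub> (lm t \<otimes>\<^bsub>LL\<^esub> lx t))"
      using lm_lx[OF tr(1)] c by simp
    also have "\<dots> = lx u \<otimes>\<^bsub>LL\<^esub> (lm (v \<otimes> t) \<otimes>\<^bsub>LL\<^esub> lx t)"
      using lm_mult[of v t] c uv tr Sc by (simp add: L.m_assoc)
    also have "\<dots> = lx u \<otimes>\<^bsub>LL\<^esub> (lm (u \<otimes> r0) \<otimes>\<^bsub>LL\<^esub> lx t)" using uv by simp
    also have "\<dots> = lx u \<otimes>\<^bsub>LL\<^esub> (lm u \<otimes>\<^bsub>LL\<^esub> (lm r0 \<otimes>\<^bsub>LL\<^esub> lx t))"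
      using lm_mult[of u r0] c uv r0 Sc by (simp add: L.m_assoc)
    also have "\<dots> = lm r0 \<otimes>\<^bsub>LL\<^esub> lx t" using lx_lm'[OF uv(1)] c by simp
    finally show ?thesis by simp
  qed
  have "lm r0 \<otimes>\<^bsub>LL\<^esub> X = lx u \<otimes>\<^bsub>LL\<^esub> lm (v \<otimes> r)"
  proof -
    have "lm r0 \<otimes>\<^bsub>LL\<^esub> X = (lm r0 \<otimes>\<^bsub>LL\<^esub> lx t) \<otimes>\<^bsub>LL\<^esub> lm r" using tr c by (simp add: L.m_assoc)
    also have "\<dots> = lx u \<otimes>\<^bsub>LL\<^esub> lm (v \<otimes> r)" unfolding key using lm_mult[of v r] uv tr c by (simp add: L.m_assoc)
    finally show ?thesis .
  qed
  then show ?thesis unfolding NL_def using uv tr by blast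
qed

lemma NL_add: "NL X \<Longrightarrow> NL Y \<Longrightarrow> NL (X \<oplus>\<^bsub>LL\<^esub> Y)"
proof -
  assume "NL X" "NL Y"
  then obtain s r t r' where sr: "s \<in> S" "r \<in> carrier R" "X = lx s \<otimes>\<^bsub>LL\<^esub> lm r"
    and tr: "t \<in> S" "r' \<in> carrier R" "Y = lx t \<otimes>\<^bsub>LL\<^esub> lm r'" unfolding NL_def by blast
  obtain u v where uv: "u \<in> S" "v \<in> carrier R" "u \<otimes> s = v \<otimes> t" using ore_l[OF Sc[OF sr(1)] tr(1)] by blast
  have us: "u \<otimes> s \<in> S" using S_mult[OF uv(1) sr(1)] .
  have c: "lx t \<in> carrier LL" "lm t \<in> carrier LL" "lx u \<in> carrier LL" "lm u \<in> carrier LL"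
    "lm v \<in> carrier LL" "lx s \<in> carrier LL" "lm s \<in> carrier LL" "lx (u \<otimes> s) \<in> carrier LL"
    "lm r \<in> carrier LL" "lm r' \<in> carrier LL"
    using tr uv sr us lx_carr lm_carr Sc by auto
  have k1: "lx s = lx (u \<otimes> s) \<otimes>\<^bsub>LL\<^esub> lm u"
    using lx_mult[OF sr(1) uv(1)] lx_lm[OF uv(1)] c by (simp add: L.m_assoc)
  have k2: "lx t = lx (u \<otimes> s) \<otimes>\<^bsub>LL\<^esub> lm v"
  proof -
    have "lx (u \<otimes> s) \<otimes>\<^bsub>LL\<^esub> lm v = lx (u \<otimes> s) \<otimes>\<^bsub>LL\<^esub> (lm v \<otimes>\<^bsub>LL\<^esub> (lm t \<otimes>\<^bsub>LL\<^esub> lx t))"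
      using lm_lx[OF tr(1)] c by simp
    also have "\<dots> = lx (u \<otimes> s) \<otimes>\<^bsub>LL\<^esub> (lm (v \<otimes> t) \<otimes>\<^bsub>LL\<^esub> lx t)"
      using lm_mult[of v t] c uv tr Sc by (simp add: L.m_assoc)
    also have "\<dots> = lx (u \<otimes> s) \<otimes>\<^bsub>LL\<^esub> (lm (u \<otimes> s) \<otimes>\<^bsub>LL\<^esub> lx t)" using uv by simp
    also have "\<dots> = lx t" using lx_lm'[OF us] c by simp
    finally show ?thesis by simp
  qed
  have "X \<oplus>\<^bsub>LL\<^esub> Y = lx (u \<otimes> s) \<otimes>\<^bsub>LL\<^esub> lm (u \<otimes> r \<oplus> v \<otimes> r')"
  proof -
    have "X \<oplus>\<^bsub>LL\<^esub> Y = lx (u \<otimes> s) \<otimes>\<^bsub>LL\<^esub> (lm u \<otimes>\<^bsub>LL\<^esub> lm r) \<oplus>\<^bsub>LL\<^esub> lx (u \<otimes> s) \<otimes>\<^bsub>LL\<^esub> (lm v \<otimes>\<^bsub>LL\<^esub> lm r')"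
      unfolding sr(3) tr(3) by (subst k1, subst k2) (use c in \<open>simp add: L.m_assoc\<close>)
    also have "\<dots> = lx (u \<otimes> s) \<otimes>\<^bsub>LL\<^esub> lm (u \<otimes> r \<oplus> v \<otimes> r')"
      using c uv sr tr Sc lm_mult lm_add by (simp add: L.r_distr)
    finally show ?thesis .
  qed
  then show ?thesis unfolding NL_def using us uv sr tr Sc by blast
qed

lemma NR_lm_mul: "r0 \<in> carrier R \<Longrightarrow> NR X \<Longrightarrow> NR (lm r0 \<otimes>\<^bsub>LL\<^esub> X)"
proof -
  assume r0: "r0 \<in> carrier R" and "NR X"
  then obtain t r where tr: "t \<in> S" "r \<in> carrier R" "X = lm r \<otimes>\<^bsub>LL\<^esub> lx t" unfolding NR_def by blast
  have "lm r0 \<otimes>\<^bsub>LL\<^esub> X = lm (r0 \<otimes> r) \<otimes>\<^bsub>LL\<^esub> lx t"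
    using tr r0 lm_mult[of r0 r] lx_carr lm_carr by (simp add: L.m_assoc)
  then show ?thesis unfolding NR_def using tr r0 by blast
qed

lemma NR_lx_mul: "s \<in> S \<Longrightarrow> NR X \<Longrightarrow> NR (lx s \<otimes>\<^bsub>LL\<^esub> X)"
proof -
  assume s: "s \<in> S" and "NR X"
  then obtain t r where tr: "t \<in> S" "r \<in> carrier R" "X = lm r \<otimes>\<^bsub>LL\<^esub> lx t" unfolding NR_def by blast
  obtain u v where uv: "u \<in> S" "v \<in> carrier R" "r \<otimes> u = s \<otimes> v" using ore_r[OF tr(2) s] by blast
  have c: "lx t \<in> carrier LL" "lx s \<in> carrier LL" "lm s \<in> carrier LL" "lx u \<in> carrier LL" "lm u \<in> carrier LL"
    "lm v \<in> carrier LL" "lm r \<in> carrier LL"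
    using tr uv s lx_carr lm_carr Sc by auto
  have key: "lx s \<otimes>\<^bsub>LL\<^esub> lm r = lm v \<otimes>\<^bsub>LL\<^esub> lx u"
  proof -
    have "lm v \<otimes>\<^bsub>LL\<^esub> lx u = lx s \<otimes>\<^bsub>LL\<^esub> (lm s \<otimes>\<^bsub>LL\<^esub> (lm v \<otimes>\<^bsub>LL\<^esub> lx u))"
      using lx_lm'[OF s] c by simp
    also have "\<dots> = lx s \<otimes>\<^bsub>LL\<^esub> (lm (s \<otimes> v) \<otimes>\<^bsub>LL\<^esub> lx u)"
      using lm_mult[of s v] c uv s Sc by (simp add: L.m_assoc)
    also have "\<dots> = lx s \<otimes>\<^bsub>LL\<^esub> (lm (r \<otimes> u) \<otimes>\<^bsub>LL\<^esub> lx u)" using uv by simp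
    also have "\<dots> = lx s \<otimes>\<^bsub>LL\<^esub> (lm r \<otimes>\<^bsub>LL\<^esub> (lm u \<otimes>\<^bsub>LL\<^esub> lx u))"
      using lm_mult[of r u] c uv tr Sc by (simp add: L.m_assoc)
    also have "\<dots> = lx s \<otimes>\<^bsub>LL\<^esub> lm r" using lm_lx[OF uv(1)] c by simp
    finally show ?thesis by simp
  qed
  have "lx s \<otimes>\<^bsub>LL\<^esub> X = lm v \<otimes>\<^bsub>LL\<^esub> lx (t \<otimes> u)"
  proof -
    have "lx s \<otimes>\<^bsub>LL\<^esub> X = (lx s \<otimes>\<^bsub>LL\<^esub> lm r) \<otimes>\<^bsub>LL\<^esub> lx t" using tr c by (simp add: L.m_assoc)
    also have "\<dots> = lm v \<otimes>\<^bsub>LL\<^esub> lx (t \<otimes> u)" unfolding key using lx_mult[OF uv(1) tr(1)] c by (simp add: L.m_assoc)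
    finally show ?thesis .
  qed
  then show ?thesis unfolding NR_def using uv tr S_mult by blast
qed

lemma NR_add: "NR X \<Longrightarrow> NR Y \<Longrightarrow> NR (X \<oplus>\<^bsub>LL\<^esub> Y)"
proof -
  assume "NR X" "NR Y"
  then obtain s r t r' where sr: "s \<in> S" "r \<in> carrier R" "X = lm r \<otimes>\<^bsub>LL\<^esub> lx s"
    and tr: "t \<in> S" "r' \<in> carrier R" "Y = lm r' \<otimes>\<^bsub>LL\<^esub> lx t" unfolding NR_def by blast
  obtain u v where uv: "u \<in> S" "v \<in> carrier R" "s \<otimes> u = t \<otimes> v" using ore_r[OF Sc[OF sr(1)] tr(1)] by blast
  have su: "s \<otimes> u \<in> S" using S_mult[OF sr(1) uv(1)] .
  have c: "lx t \<in> carrier LL" "lm t \<in> carrier LL" "lx u \<in> carrier LL" "lm u \<in> carrier LL"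
    "lm v \<in> carrier LL" "lx s \<in> carrier LL" "lm s \<in> carrier LL" "lx (s \<otimes> u) \<in> carrier LL"
    "lm r \<in> carrier LL" "lm r' \<in> carrier LL"
    using tr uv sr su lx_carr lm_carr Sc by auto
  have k1: "lx s = lm u \<otimes>\<^bsub>LL\<^esub> lx (s \<otimes> u)"
    using lx_mult[OF uv(1) sr(1)] lm_lx'[OF uv(1)] c by simp
  have k2: "lx t = lm v \<otimes>\<^bsub>LL\<^esub> lx (s \<otimes> u)"
  proof -
    have "lm v \<otimes>\<^bsub>LL\<^esub> lx (s \<otimes> u) = lx t \<otimes>\<^bsub>LL\<^esub> (lm t \<otimes>\<^bsub>LL\<^esub> (lm v \<otimes>\<^bsub>LL\<^esub> lx (s \<otimes> u)))"
      using lx_lm'[OF tr(1)] c by simp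
    also have "\<dots> = lx t \<otimes>\<^bsub>LL\<^esub> (lm (t \<otimes> v) \<otimes>\<^bsub>LL\<^esub> lx (s \<otimes> u))"
      using lm_mult[of t v] c uv tr Sc by (simp add: L.m_assoc)
    also have "\<dots> = lx t \<otimes>\<^bsub>LL\<^esub> (lm (s \<otimes> u) \<otimes>\<^bsub>LL\<^esub> lx (s \<otimes> u))" using uv by simp
    also have "\<dots> = lx t" using lm_lx[OF su] c by simp
    finally show ?thesis by simp
  qed
  have "X \<oplus>\<^bsub>LL\<^esub> Y = lm (r \<otimes> u \<oplus> r' \<otimes> v) \<otimes>\<^bsub>LL\<^esub> lx (s \<otimes> u)"
  proof -
    have "X \<oplus>\<^bsub>LL\<^esub> Y = (lm r \<otimes>\<^bsub>LL\<^esub> lm u) \<otimes>\<^bsub>LL\<^esub> lx (s \<otimes> u) \<oplus>\<^bsub>LL\<^esub> (lm r' \<otimes>\<^bsub>LL\<^esub> lm v) \<otimes>\<^bsub>LL\<^esub> lx (s \<otimes> u)"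
      unfolding sr(3) tr(3) by (subst k1, subst k2) (use c in \<open>simp add: L.m_assoc\<close>)
    also have "\<dots> = lm (r \<otimes> u \<oplus> r' \<otimes> v) \<otimes>\<^bsub>LL\<^esub> lx (s \<otimes> u)"
      using c uv sr tr Sc lm_mult lm_add by (simp add: L.l_distr)
    finally show ?thesis .
  qed
  then show ?thesis unfolding NR_def using su uv sr tr Sc by blast
qed

lemma pi_hom: "(\<lambda>f. II +>\<^bsub>FF\<^esub> f) \<in> ring_hom FF LL"
  unfolding loc_ring_def using I.rcos_ring_hom by simp

lemma delta_cons: "delta (a # u) = letter a \<otimes>\<^bsub>FF\<^esub> delta u"
  unfolding loc_free_def free_mult letter_delta using cmul_delta[of "[a]" u] by simp

lemma N_delta:
  assumes "set u \<subseteq> loc_alph R S"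
  shows "NL (II +>\<^bsub>FF\<^esub> delta u) \<and> NR (II +>\<^bsub>FF\<^esub> delta u)"
  using assms
proof (induction u)
  case Nil
  have "delta [] = \<one>\<^bsub>FF\<^esub>" unfolding loc_free_def by (simp add: one_delta)
  then show ?case using NL_one NR_one LL_one by simp
next
  case (Cons a u)
  have dc: "delta u \<in> carrier FF" using Cons.prems unfolding loc_free_def by (intro delta_carrier) auto
  have IH: "NL (II +>\<^bsub>FF\<^esub> delta u)" "NR (II +>\<^bsub>FF\<^esub> delta u)" using Cons by auto
  have a: "a \<in> loc_alph R S" using Cons.prems by auto
  show ?case
  proof (cases a)
    case (Inl r)
    then have r: "r \<in> carrier R" using a unfolding loc_alph_def by auto
    have "II +>\<^bsub>FF\<^esub> delta (a # u) = lm r \<otimes>\<^bsub>LL\<^esub> (II +>\<^bsub>FF\<^esub> delta u)"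
      unfolding delta_cons Inl loc_map_def using LL_mult[OF letter_l_carr[OF r] dc] by simp
    then show ?thesis using NL_lm_mul[OF r IH(1)] NR_lm_mul[OF r IH(2)] by simp
  next
    case (Inr s)
    then have s: "s \<in> S" using a unfolding loc_alph_def by auto
    have "II +>\<^bsub>FF\<^esub> delta (a # u) = lx s \<otimes>\<^bsub>LL\<^esub> (II +>\<^bsub>FF\<^esub> delta u)"
      unfolding delta_cons Inr loc_x_def using LL_mult[OF letter_r_carr[OF s] dc] by simp
    then show ?thesis using NL_lx_mul[OF s IH(1)] NR_lx_mul[OF s IH(2)] by simp
  qed
qed

lemma N_all:
  assumes X: "X \<in> carrier LL"
  shows "NL X \<and> NR X"
proof -
  obtain f where f: "f \<in> carrier FF" "X = II +>\<^bsub>FF\<^esub> f" using X by (auto simp: LL_carrier)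
  interpret h: ring_hom_ring FF LL "\<lambda>f. II +>\<^bsub>FF\<^esub> f"
    by (intro ring_hom_ringI2 FF_ring LL_ring pi_hom)
  have "NL (II +>\<^bsub>FF\<^esub> f) \<and> NR (II +>\<^bsub>FF\<^esub> f)"
    using f(1) unfolding loc_free_def
  proof (induction f rule: free_induct)
    case zero
    have "II +>\<^bsub>FF\<^esub> \<zero>\<^bsub>FF\<^esub> = \<zero>\<^bsub>LL\<^esub>" by (rule h.hom_zero)
    then show ?case using NL_zero NR_zero by (simp add: loc_free_def)
  next
    case (delta u)
    then show ?case using N_delta by (simp add: loc_free_def)
  next
    case (neg x)
    have "II +>\<^bsub>FF\<^esub> (\<ominus>\<^bsub>FF\<^esub> x) = \<ominus>\<^bsub>LL\<^esub> (II +>\<^bsub>FF\<^esub> x)"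
      using neg.hyps unfolding loc_free_def[symmetric] by (rule h.hom_a_inv)
    then show ?case using neg NL_neg NR_neg by (simp add: loc_free_def)
  next
    case (add x y)
    have "II +>\<^bsub>FF\<^esub> (x \<oplus>\<^bsub>FF\<^esub> y) = (II +>\<^bsub>FF\<^esub> x) \<oplus>\<^bsub>LL\<^esub> (II +>\<^bsub>FF\<^esub> y)"
      using add.hyps unfolding loc_free_def[symmetric] by (rule h.hom_add)
    then show ?case using add NL_add NR_add by (simp add: loc_free_def)
  qed
  then show ?thesis using f by simp
qed

lemma fa_sub_ass: "fa \<subseteq> ass R S"
proof
  fix r assume "r \<in> fa"
  then obtain s t where st: "r \<in> carrier R" "s \<in> S" "t \<in> S" "s \<otimes> r \<otimes> t = \<zero>" unfolding fa_mem by blast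
  have c: "lx s \<in> carrier LL" "lx t \<in> carrier LL" "lm s \<in> carrier LL" "lm t \<in> carrier LL" "lm r \<in> carrier LL"
    using st lx_carr lm_carr Sc by auto
  have "lm r = lx s \<otimes>\<^bsub>LL\<^esub> (lm s \<otimes>\<^bsub>LL\<^esub> (lm r \<otimes>\<^bsub>LL\<^esub> (lm t \<otimes>\<^bsub>LL\<^esub> lx t)))"
    using lx_lm'[OF st(2)] lm_lx[OF st(3)] c by simp
  also have "\<dots> = lx s \<otimes>\<^bsub>LL\<^esub> (lm (s \<otimes> r \<otimes> t) \<otimes>\<^bsub>LL\<^esub> lx t)"
  proof -
    have e: "lm (s \<otimes> r \<otimes> t) = lm s \<otimes>\<^bsub>LL\<^esub> (lm r \<otimes>\<^bsub>LL\<^esub> lm t)"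
      using lm_mult st(1-3) c Sc by (simp add: L.m_assoc)
    show ?thesis unfolding e using c by (simp add: L.m_assoc)
  qed
  also have "\<dots> = \<zero>\<^bsub>LL\<^esub>" using st c by (simp add: lm_zero)
  finally show "r \<in> ass R S" unfolding ass_def using st by simp
qed

end



lemma (in fevl) fev_diff:
  assumes f: "f \<in> carrier (free_ring A)" and h: "h \<in> carrier (free_ring A)"
  shows "fev B g (\<lambda>w. f w - h w) = fev B g f \<ominus> fev B g h"
proof -
  interpret F: ring "free_ring A" by (rule free_ring_is_ring)
  have e: "(\<lambda>w. f w - h w) = f \<oplus>\<^bsub>free_ring A\<^esub> (\<ominus>\<^bsub>free_ring A\<^esub> h)"
    using h by (simp add: free_neg free_simps fun_eq_iff)
  show ?thesis unfolding e using f h by (simp add: fev_add_free fev_neg minus_eq)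
qed

context ore_ctx
begin

interpretation F: ring FF by (rule FF_ring)
interpretation I: ideal II FF by (rule II_ideal)
interpretation L: ring LL by (rule LL_ring)
interpretation FAI: ideal fa R by (rule fa_ideal)
interpretation AB: ring Abar by (rule Abar_ring)

lemma lrf_chi:
  fixes Q :: "('q, 'n) ring_scheme" and \<phi>
  assumes lrf: "left_ring_of_fractions Abar Tbar Q \<phi>"
  shows "\<exists>\<chi>. \<chi> \<in> ring_hom LL Q \<and> bij_betw \<chi> (carrier LL) (carrier Q)
           \<and> (\<forall>r\<in>carrier R. \<chi> (lm r) = \<phi> (fa +> r))"
proof -
  have Qr: "ring Q" and ph: "\<phi> \<in> ring_hom Abar Q" and un: "\<And>t. t \<in> Tbar \<Longrightarrow> \<phi> t \<in> Units Q"
    and sur: "\<And>q. q \<in> carrier Q \<Longrightarrow> \<exists>t\<in>Tbar. \<exists>a\<in>carrier Abar. q = inv\<^bsub>Q\<^esub> (\<phi> t) \<otimes>\<^bsub>Q\<^esub> \<phi> a"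
    and ker: "\<And>a. a \<in> carrier Abar \<Longrightarrow> \<phi> a = \<zero>\<^bsub>Q\<^esub> \<longleftrightarrow> (\<exists>t\<in>Tbar. t \<otimes>\<^bsub>Abar\<^esub> a = \<zero>\<^bsub>Abar\<^esub>)"
    using lrf unfolding left_ring_of_fractions_def by auto
  interpret Q: ring Q by (rule Qr)
  interpret PH: ring_hom_ring Abar Q \<phi> by (intro ring_hom_ringI2 Abar_ring Qr ph)
  define p where "p r = \<phi> (fa +> r)" for r
  have pc: "p r \<in> carrier Q" if "r \<in> carrier R" for r unfolding p_def using that Abar_cosetI by simp
  have p_add: "p (r \<oplus> r') = p r \<oplus>\<^bsub>Q\<^esub> p r'" if "r \<in> carrier R" "r' \<in> carrier R" for r r'
    unfolding p_def using that Abar_add[symmetric] Abar_cosetI by simp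
  have p_mult: "p (r \<otimes> r') = p r \<otimes>\<^bsub>Q\<^esub> p r'" if "r \<in> carrier R" "r' \<in> carrier R" for r r'
    unfolding p_def using that Abar_mult[symmetric] Abar_cosetI by simp
  have p_one: "p \<one> = \<one>\<^bsub>Q\<^esub>" unfolding p_def using Abar_one[symmetric] by simp
  have p_unit: "p s \<in> Units Q" if "s \<in> S" for s unfolding p_def using un that by auto
  define g where "g a = (case a of Inl r \<Rightarrow> (if r \<in> carrier R then p r else \<zero>\<^bsub>Q\<^esub>)
                                 | Inr s \<Rightarrow> (if s \<in> S then inv\<^bsub>Q\<^esub> (p s) else \<zero>\<^bsub>Q\<^esub>))" for a
  have gc: "g a \<in> carrier Q" for a
    unfolding g_def using pc p_unit by (cases a) auto
  interpret E: fevl Q g by (unfold_locales) (rule gc)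
  define E where "E = fev Q g"
  have Ehom: "E \<in> ring_hom FF Q" unfolding E_def loc_free_def by (rule E.fev_hom)
  interpret EH: ring_hom_ring FF Q E by (intro ring_hom_ringI2 FF_ring Qr Ehom)
  have El: "E (letter (Inl r)) = p r" if "r \<in> carrier R" for r
    unfolding E_def E.fev_letter using that by (simp add: g_def)
  have Ex: "E (letter (Inr s)) = inv\<^bsub>Q\<^esub> (p s)" if "s \<in> S" for s
    unfolding E_def E.fev_letter using that by (simp add: g_def)
  have Ediff: "E (\<lambda>w. f w - h w) = E f \<ominus>\<^bsub>Q\<^esub> E h" if "f \<in> carrier FF" "h \<in> carrier FF" for f h
    unfolding E_def using that unfolding loc_free_def by (rule E.fev_diff)
  have k1: "E (\<lambda>w. letter (Inl (r \<oplus> r')) w - letter (Inl r) w - letter (Inl r') w) = \<zero>\<^bsub>Q\<^esub>"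
    if rr: "r \<in> carrier R" "r' \<in> carrier R" for r r'
  proof -
    have l1: "letter (Inl (r \<oplus> r')) \<in> carrier FF" "letter (Inl r) \<in> carrier FF" "letter (Inl r') \<in> carrier FF"
      using rr letter_l_carr by auto
    have d1: "(\<lambda>w. letter (Inl (r \<oplus> r')) w - letter (Inl r) w) \<in> carrier FF"
      using FF_diff[OF l1(1,2)] F.minus_closed[OF l1(1,2)] by simp
    have "E (\<lambda>w. letter (Inl (r \<oplus> r')) w - letter (Inl r) w - letter (Inl r') w)
        = E (\<lambda>w. letter (Inl (r \<oplus> r')) w - letter (Inl r) w) \<ominus>\<^bsub>Q\<^esub> E (letter (Inl r'))"
      using Ediff[OF d1 l1(3)] by simp
    also have "\<dots> = E (letter (Inl (r \<oplus> r'))) \<ominus>\<^bsub>Q\<^esub> E (letter (Inl r)) \<ominus>\<^bsub>Q\<^esub> E (letter (Inl r'))"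
      using Ediff[OF l1(1,2)] by simp
    also have "\<dots> = (p r \<oplus>\<^bsub>Q\<^esub> p r') \<ominus>\<^bsub>Q\<^esub> p r \<ominus>\<^bsub>Q\<^esub> p r'" using rr El p_add by simp
    also have "\<dots> = \<zero>\<^bsub>Q\<^esub>"
    proof -
      have a: "p r \<in> carrier Q" "p r' \<in> carrier Q" using pc rr by auto
      have "(p r \<oplus>\<^bsub>Q\<^esub> p r') \<ominus>\<^bsub>Q\<^esub> p r = p r'"
        using a by (simp only: Q.minus_eq Q.a_comm[of "p r" "p r'"] Q.a_assoc Q.r_neg Q.r_zero Q.a_inv_closed)
      then show ?thesis using a by (simp add: Q.r_neg Q.minus_eq)
    qed
    finally show ?thesis .
  qed
  have k2: "E (\<lambda>w. letter (Inl (r \<otimes> r')) w - (letter (Inl r) \<otimes>\<^bsub>FF\<^esub> letter (Inl r')) w) = \<zero>\<^bsub>Q\<^esub>"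
    if rr: "r \<in> carrier R" "r' \<in> carrier R" for r r'
  proof -
    have "E (\<lambda>w. letter (Inl (r \<otimes> r')) w - (letter (Inl r) \<otimes>\<^bsub>FF\<^esub> letter (Inl r')) w)
        = E (letter (Inl (r \<otimes> r'))) \<ominus>\<^bsub>Q\<^esub> E (letter (Inl r) \<otimes>\<^bsub>FF\<^esub> letter (Inl r'))"
      using rr letter_l_carr by (intro Ediff) auto
    also have "\<dots> = p (r \<otimes> r') \<ominus>\<^bsub>Q\<^esub> p r \<otimes>\<^bsub>Q\<^esub> p r'" using rr El letter_l_carr by simp
    also have "\<dots> = \<zero>\<^bsub>Q\<^esub>" using rr pc p_mult by (simp add: Q.r_neg Q.minus_eq)
    finally show ?thesis .
  qed
  have k3: "E (\<lambda>w. letter (Inl \<one>) w - \<one>\<^bsub>FF\<^esub> w) = \<zero>\<^bsub>Q\<^esub>"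
  proof -
    have "E (\<lambda>w. letter (Inl \<one>) w - \<one>\<^bsub>FF\<^esub> w) = E (letter (Inl \<one>)) \<ominus>\<^bsub>Q\<^esub> E \<one>\<^bsub>FF\<^esub>"
      using letter_l_carr by (intro Ediff) auto
    also have "\<dots> = \<zero>\<^bsub>Q\<^esub>" using El p_one by (simp add: Q.r_neg Q.minus_eq)
    finally show ?thesis .
  qed
  have k4: "E (\<lambda>w. (letter (Inl s) \<otimes>\<^bsub>FF\<^esub> letter (Inr s)) w - \<one>\<^bsub>FF\<^esub> w) = \<zero>\<^bsub>Q\<^esub>"
    if s: "s \<in> S" for s
  proof -
    have "E (\<lambda>w. (letter (Inl s) \<otimes>\<^bsub>FF\<^esub> letter (Inr s)) w - \<one>\<^bsub>FF\<^esub> w) = E (letter (Inl s) \<otimes>\<^bsub>FF\<^esub> letter (Inr s)) \<ominus>\<^bsub>Q\<^esub> E \<one>\<^bsub>FF\<^esub>"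
      using s Sc letter_l_carr letter_r_carr by (intro Ediff) auto
    also have "\<dots> = p s \<otimes>\<^bsub>Q\<^esub> inv\<^bsub>Q\<^esub> (p s) \<ominus>\<^bsub>Q\<^esub> \<one>\<^bsub>Q\<^esub>" using s Sc El Ex letter_l_carr letter_r_carr by simp
    also have "\<dots> = \<zero>\<^bsub>Q\<^esub>" using p_unit[OF s] by (simp add: Q.r_neg Q.minus_eq)
    finally show ?thesis .
  qed
  have k5: "E (\<lambda>w. (letter (Inr s) \<otimes>\<^bsub>FF\<^esub> letter (Inl s)) w - \<one>\<^bsub>FF\<^esub> w) = \<zero>\<^bsub>Q\<^esub>"
    if s: "s \<in> S" for s
  proof -
    have "E (\<lambda>w. (letter (Inr s) \<otimes>\<^bsub>FF\<^esub> letter (Inl s)) w - \<one>\<^bsub>FF\<^esub> w) = E (letter (Inr s) \<otimes>\<^bsub>FF\<^esub> letter (Inl s)) \<ominus>\<^bsub>Q\<^esub> E \<one>\<^bsub>FF\<^esub>"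
      using s Sc letter_l_carr letter_r_carr by (intro Ediff) auto
    also have "\<dots> = inv\<^bsub>Q\<^esub> (p s) \<otimes>\<^bsub>Q\<^esub> p s \<ominus>\<^bsub>Q\<^esub> \<one>\<^bsub>Q\<^esub>" using s Sc El Ex letter_l_carr letter_r_carr by simp
    also have "\<dots> = \<zero>\<^bsub>Q\<^esub>" using p_unit[OF s] by (simp add: Q.r_neg Q.minus_eq)
    finally show ?thesis .
  qed
  have rels_ker: "loc_rels R S \<subseteq> a_kernel FF Q E"
  proof
    fix z assume z: "z \<in> loc_rels R S"
    have zc: "z \<in> carrier FF" using z rels_carr by auto
    have "E z = \<zero>\<^bsub>Q\<^esub>"
      using z k1 k2 k3 k4 k5 unfolding loc_rels_def by blast
    then show "z \<in> a_kernel FF Q E" using zc unfolding a_kernel_def' by blast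
  qed
  have II_ker: "II \<subseteq> a_kernel FF Q E"
    unfolding loc_ideal_def by (rule F.genideal_minimal[OF EH.kernel_is_ideal rels_ker])
  define chi where "chi X = E (SOME f. f \<in> X)" for X
  have chi_c: "chi (II +>\<^bsub>FF\<^esub> f) = E f" if f: "f \<in> carrier FF" for f
  proof -
    have "f \<in> II +>\<^bsub>FF\<^esub> f" using I.a_rcos_self[OF f] .
    then have sm: "(SOME f'. f' \<in> II +>\<^bsub>FF\<^esub> f) \<in> II +>\<^bsub>FF\<^esub> f" by (rule someI[where P="\<lambda>f'. f' \<in> II +>\<^bsub>FF\<^esub> f"])
    have ee: "E f' = E f" if fm: "f' \<in> II +>\<^bsub>FF\<^esub> f" for f'
    proof -
      have "f' \<in> (\<Union>h\<in>II. {h \<oplus>\<^bsub>FF\<^esub> f})" using fm unfolding a_r_coset_def' .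
      then obtain i where i: "i \<in> II" "f' = i \<oplus>\<^bsub>FF\<^esub> f" by blast
      have ic: "i \<in> carrier FF" using I.a_Hcarr[OF i(1)] .
      have Ei: "E i = \<zero>\<^bsub>Q\<^esub>" using i(1) II_ker unfolding a_kernel_def' by blast
      have "E f' = E i \<oplus>\<^bsub>Q\<^esub> E f" unfolding i(2) by (rule EH.hom_add[OF ic f])
      also have "\<dots> = E f" unfolding Ei using EH.hom_closed[OF f] by (rule Q.l_zero)
      finally show ?thesis .
    qed
    show ?thesis unfolding chi_def by (rule ee[OF sm])
  qed
  have chi_hom: "chi \<in> ring_hom LL Q"
  proof (rule ring_hom_memI)
    fix X assume "X \<in> carrier LL"
    then obtain f where "f \<in> carrier FF" "X = II +>\<^bsub>FF\<^esub> f" by (auto simp: LL_carrier)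
    then show "chi X \<in> carrier Q" using chi_c by simp
  next
    fix X Y assume "X \<in> carrier LL" "Y \<in> carrier LL"
    then obtain f h where fh: "f \<in> carrier FF" "X = II +>\<^bsub>FF\<^esub> f" "h \<in> carrier FF" "Y = II +>\<^bsub>FF\<^esub> h"
      by (auto simp: LL_carrier)
    show "chi (X \<otimes>\<^bsub>LL\<^esub> Y) = chi X \<otimes>\<^bsub>Q\<^esub> chi Y" using fh chi_c LL_mult by simp
    show "chi (X \<oplus>\<^bsub>LL\<^esub> Y) = chi X \<oplus>\<^bsub>Q\<^esub> chi Y" using fh chi_c LL_add by simp
  next
    show "chi \<one>\<^bsub>LL\<^esub> = \<one>\<^bsub>Q\<^esub>" using chi_c LL_one by simp
  qed
  interpret CH: ring_hom_ring LL Q chi by (intro ring_hom_ringI2 LL_ring Qr chi_hom)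
  have chi_lm: "chi (lm r) = p r" if "r \<in> carrier R" for r
    unfolding loc_map_def using chi_c El letter_l_carr that by simp
  have chi_lx: "chi (lx s) = inv\<^bsub>Q\<^esub> (p s)" if "s \<in> S" for s
    unfolding loc_x_def using chi_c Ex letter_r_carr that by simp
  have surj: "chi ` carrier LL = carrier Q"
  proof
    show "chi ` carrier LL \<subseteq> carrier Q" using CH.hom_closed by auto
  next
    show "carrier Q \<subseteq> chi ` carrier LL"
    proof
      fix q assume "q \<in> carrier Q"
      then obtain t a where ta: "t \<in> Tbar" "a \<in> carrier Abar" "q = inv\<^bsub>Q\<^esub> (\<phi> t) \<otimes>\<^bsub>Q\<^esub> \<phi> a" using sur by blast
      obtain s where s: "s \<in> S" "t = fa +> s" using ta by auto
      obtain r where r: "r \<in> carrier R" "a = fa +> r" using ta by (auto simp: Abar_carrier)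
      have "q = chi (lx s \<otimes>\<^bsub>LL\<^esub> lm r)"
        using ta s r chi_lx chi_lm lx_carr lm_carr unfolding p_def by simp
      moreover have "lx s \<otimes>\<^bsub>LL\<^esub> lm r \<in> carrier LL" using s r lx_carr lm_carr by simp
      ultimately show "q \<in> chi ` carrier LL" by (rule image_eqI)
    qed
  qed
  have inj: "inj_on chi (carrier LL)"
  proof (rule inj_onI)
    fix X Y assume X: "X \<in> carrier LL" and Y: "Y \<in> carrier LL" and e: "chi X = chi Y"
    have D: "X \<ominus>\<^bsub>LL\<^esub> Y \<in> carrier LL" using X Y by (rule L.minus_closed)
    have "chi (X \<ominus>\<^bsub>LL\<^esub> Y) = chi X \<oplus>\<^bsub>Q\<^esub> chi (\<ominus>\<^bsub>LL\<^esub> Y)"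
      unfolding L.minus_eq using X L.a_inv_closed[OF Y] by (rule CH.hom_add)
    also have "\<dots> = chi Y \<oplus>\<^bsub>Q\<^esub> \<ominus>\<^bsub>Q\<^esub> chi Y" using CH.hom_a_inv[OF Y] e by simp
    also have "\<dots> = \<zero>\<^bsub>Q\<^esub>" using CH.hom_closed[OF Y] by (rule Q.r_neg)
    finally have cz: "chi (X \<ominus>\<^bsub>LL\<^esub> Y) = \<zero>\<^bsub>Q\<^esub>" .
    obtain s r where sr: "s \<in> S" "r \<in> carrier R" "X \<ominus>\<^bsub>LL\<^esub> Y = lx s \<otimes>\<^bsub>LL\<^esub> lm r"
      using N_all[OF D] unfolding NL_def by blast
    have "chi (lx s \<otimes>\<^bsub>LL\<^esub> lm r) = chi (lx s) \<otimes>\<^bsub>Q\<^esub> chi (lm r)"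
      using lx_carr[OF sr(1)] lm_carr[OF sr(2)] by (rule CH.hom_mult)
    then have z1: "inv\<^bsub>Q\<^esub> (p s) \<otimes>\<^bsub>Q\<^esub> p r = \<zero>\<^bsub>Q\<^esub>"
      using cz sr(3) chi_lx[OF sr(1)] chi_lm[OF sr(2)] by simp
    have pu: "p s \<in> carrier Q" "inv\<^bsub>Q\<^esub> (p s) \<in> carrier Q" "p s \<otimes>\<^bsub>Q\<^esub> inv\<^bsub>Q\<^esub> (p s) = \<one>\<^bsub>Q\<^esub>"
      using p_unit[OF sr(1)] by auto
    have "p r = (p s \<otimes>\<^bsub>Q\<^esub> inv\<^bsub>Q\<^esub> (p s)) \<otimes>\<^bsub>Q\<^esub> p r" using pu(3) pc[OF sr(2)] by simp
    also have "\<dots> = p s \<otimes>\<^bsub>Q\<^esub> (inv\<^bsub>Q\<^esub> (p s) \<otimes>\<^bsub>Q\<^esub> p r)" using pu(1,2) pc[OF sr(2)] by (rule Q.m_assoc)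
    also have "\<dots> = \<zero>\<^bsub>Q\<^esub>" unfolding z1 using pu(1) by (rule Q.r_null)
    finally have "p r = \<zero>\<^bsub>Q\<^esub>" .
    then obtain t where t: "t \<in> Tbar" "t \<otimes>\<^bsub>Abar\<^esub> (fa +> r) = \<zero>\<^bsub>Abar\<^esub>"
      using ker[of "fa +> r"] Abar_cosetI[OF sr(2)] unfolding p_def by blast
    obtain s' where s': "s' \<in> S" "t = fa +> s'" using t(1) by blast
    have "fa +> (s' \<otimes> r) = fa" using t(2) s' Abar_mult[OF Sc[OF s'(1)] sr(2)] Abar_zero by simp
    then have "s' \<otimes> r \<in> fa" using Abar_is_zero[of "s' \<otimes> r"] Sc[OF s'(1)] sr(2) by simp
    then have "r \<in> fa" using fa_lcancel s'(1) sr(2) by blast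
    then have "lm r = \<zero>\<^bsub>LL\<^esub>" using fa_sub_ass unfolding ass_def by blast
    then have "X \<ominus>\<^bsub>LL\<^esub> Y = \<zero>\<^bsub>LL\<^esub>" using sr(3) lx_carr[OF sr(1)] by simp
    then have "X \<ominus>\<^bsub>LL\<^esub> Y \<oplus>\<^bsub>LL\<^esub> Y = Y" using Y by simp
    moreover have "X \<ominus>\<^bsub>LL\<^esub> Y \<oplus>\<^bsub>LL\<^esub> Y = X" using X Y by (simp add: L.minus_eq L.a_assoc L.l_neg)
    ultimately show "X = Y" by simp
  qed
  have bij: "bij_betw chi (carrier LL) (carrier Q)" unfolding bij_betw_def using inj surj by blast
  have lmr: "\<forall>r\<in>carrier R. chi (lm r) = \<phi> (fa +> r)" using chi_lm unfolding p_def by blast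
  show ?thesis using chi_hom bij lmr by blast
qed

end



context ore_ctx
begin

interpretation L: ring LL by (rule LL_ring)

lemma lrf_ker:
  fixes Q :: "('q, 'n) ring_scheme"
  assumes lrf: "left_ring_of_fractions Abar Tbar Q \<phi>" and r: "r \<in> carrier R"
    and z: "\<phi> (fa +> r) = \<zero>\<^bsub>Q\<^esub>"
  shows "r \<in> fa"
proof -
  have ker: "\<And>a. a \<in> carrier Abar \<Longrightarrow> \<phi> a = \<zero>\<^bsub>Q\<^esub> \<longleftrightarrow> (\<exists>t\<in>Tbar. t \<otimes>\<^bsub>Abar\<^esub> a = \<zero>\<^bsub>Abar\<^esub>)"
    using lrf unfolding left_ring_of_fractions_def by auto
  obtain t where t: "t \<in> Tbar" "t \<otimes>\<^bsub>Abar\<^esub> (fa +> r) = \<zero>\<^bsub>Abar\<^esub>"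
    using ker[of "fa +> r"] Abar_cosetI[OF r] z by blast
  obtain s' where s': "s' \<in> S" "t = fa +> s'" using t(1) by blast
  have "fa +> (s' \<otimes> r) = fa" using t(2) s' Abar_mult[OF Sc[OF s'(1)] r] Abar_zero by simp
  then have "s' \<otimes> r \<in> fa" using Abar_is_zero[of "s' \<otimes> r"] Sc[OF s'(1)] r by simp
  then show "r \<in> fa" using fa_lcancel s'(1) r by blast
qed

lemma main_ass: "ass R S = fa"
proof
  show "fa \<subseteq> ass R S" by (rule fa_sub_ass)
next
  show "ass R S \<subseteq> fa"
  proof
    fix r assume "r \<in> ass R S"
    then have r: "r \<in> carrier R" "lm r = \<zero>\<^bsub>LL\<^esub>" unfolding ass_def by auto
    interpret O: ore_reg Abar Tbar by (rule ore_reg_Abar)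
    obtain chi where chi: "chi \<in> ring_hom LL O.Qring" "\<forall>r\<in>carrier R. chi (lm r) = O.qphi (fa +> r)"
      using lrf_chi[OF O.qphi_lrf] by blast
    interpret CH: ring_hom_ring LL O.Qring chi by (intro ring_hom_ringI2 LL_ring O.Qring_ring chi(1))
    have "O.qphi (fa +> r) = \<zero>\<^bsub>O.Qring\<^esub>" using chi(2) r CH.hom_zero by metis
    then show "r \<in> fa" using lrf_ker[OF O.qphi_lrf r(1)] by blast
  qed
qed

lemma main_loc: "localizable R S"
  unfolding localizable_def
proof (intro conjI ballI)
  show "mult_set R S" using ore unfolding ore_set_def by blast
  show "\<one>\<^bsub>LL\<^esub> \<noteq> \<zero>\<^bsub>LL\<^esub>"
  proof
    assume "\<one>\<^bsub>LL\<^esub> = \<zero>\<^bsub>LL\<^esub>"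
    then have "\<one> \<in> ass R S" unfolding ass_def using lm_one by simp
    then show False using main_ass S_fa S_one by auto
  qed
next
  fix u assume "u \<in> carrier LL"
  then have "NL u" "NR u" using N_all by auto
  then show "\<exists>s\<in>S. \<exists>r\<in>carrier R. u = lx s \<otimes>\<^bsub>LL\<^esub> lm r"
    and "\<exists>s'\<in>S. \<exists>r'\<in>carrier R. u = lm r' \<otimes>\<^bsub>LL\<^esub> lx s'"
    unfolding NL_def NR_def by auto
qed

lemma main_iso:
  fixes Q :: "('q, 'n) ring_scheme"
  assumes lrf: "left_ring_of_fractions Abar Tbar Q \<phi>"
  shows "\<exists>\<psi>. \<psi> \<in> ring_iso Q LL \<and> (\<forall>r\<in>carrier R. \<psi> (\<phi> (fa +> r)) = lm r)"
proof -
  obtain chi where chi: "chi \<in> ring_hom LL Q" "bij_betw chi (carrier LL) (carrier Q)"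
    "\<forall>r\<in>carrier R. chi (lm r) = \<phi> (fa +> r)"
    using lrf_chi[OF lrf] by blast
  have iso: "chi \<in> ring_iso LL Q" unfolding ring_iso_def using chi by blast
  have "inv_into (carrier LL) chi \<in> ring_iso Q LL" by (rule ring_iso_set_sym[OF LL_ring iso])
  moreover have "\<forall>r\<in>carrier R. inv_into (carrier LL) chi (\<phi> (fa +> r)) = lm r"
  proof
    fix r assume r: "r \<in> carrier R"
    have "inv_into (carrier LL) chi (chi (lm r)) = lm r"
      using chi(2) lm_carr[OF r] by (simp add: bij_betw_def inv_into_f_f)
    then show "inv_into (carrier LL) chi (\<phi> (fa +> r)) = lm r" using chi(3) r by simp
  qed
  ultimately show ?thesis by blast
qed

end

theorem theorem3p1:
  fixes R :: "('a, 'm) ring_scheme"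
  assumes "ring R"
  shows "(\<forall>S. ore_set R S \<longrightarrow> localizable R S) \<and>
         (\<forall>S. ore_set R S \<longrightarrow>
           localizable R S \<and> ass R S = frak_a R S
           \<and> left_denominator_set (R Quot frak_a R S)
                 ((\<lambda>r. a_r_coset R (frak_a R S) r) ` S)
           \<and> (\<forall>(Q :: ('q, 'n) ring_scheme) \<phi>.
                 left_ring_of_fractions (R Quot frak_a R S)
                   ((\<lambda>r. a_r_coset R (frak_a R S) r) ` S) Q \<phi> \<longrightarrow>
                 (\<exists>\<psi>. \<psi> \<in> ring_iso Q (loc_ring R S) \<and>
                    (\<forall>r\<in>carrier R. \<psi> (\<phi> (a_r_coset R (frak_a R S) r)) = loc_map R S r))))"
proof -
  have main: "localizable R S \<and> ass R S = frak_a R S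
           \<and> left_denominator_set (R Quot frak_a R S)
                 ((\<lambda>r. a_r_coset R (frak_a R S) r) ` S)
           \<and> (\<forall>(Q :: ('q, 'n) ring_scheme) \<phi>.
                 left_ring_of_fractions (R Quot frak_a R S)
                   ((\<lambda>r. a_r_coset R (frak_a R S) r) ` S) Q \<phi> \<longrightarrow>
                 (\<exists>\<psi>. \<psi> \<in> ring_iso Q (loc_ring R S) \<and>
                    (\<forall>r\<in>carrier R. \<psi> (\<phi> (a_r_coset R (frak_a R S) r)) = loc_map R S r)))"
    if os: "ore_set R S" for S
  proof -
    interpret ore_ctx R S using assms os by (intro ore_ctx.intro ore_ctx_axioms.intro)
    show ?thesis using main_loc main_ass left_den_Abar main_iso by blast
  qed
  then show ?thesis by blast
qed


end
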